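(* Under Assumptions A1–A3 below, for all positive integers $k$, \[ \frac{\partial^k\hat\lambda_\psi}{\partial\psi^k}\Big|_{\psi=\hat\psi}=O_p(1),\quad \frac{d^k}{d\psi^k}\tilde\jmath_{\lambda\psi}\Big|_{\psi=\hat\psi}=O_p(n),\quad \frac{d^k}{d\psi^k}\tilde\jmath_{\lambda\lambda}\Big|_{\psi=\hat\psi}=O_p(n), \] \[ \kappa_k(\hat\psi)=O_p\{n^{-(k-2)/2}\},\qquad \gamma_k(\hat\psi)=O_p(1). \]
   Context: Data $y=(y_1,\dots,y_n)$ are generated independently from a parametric model with parameter $\theta=(\psi,\lambda)$, $\psi$ a scalar parameter of interest, $\lambda\in\mathbb{R}^{p-1}$ a nuisance parameter ($p$ fixed, $n\to\infty$); true value $\theta_0=(\psi_0,\lambda_0)$. Let $l(\theta)$ be the log-likelihood, $\hat\theta=(\hat\psi,\hat\lambda)$ the MLE, $\hat\lambda_\psi$ the maximizer of $l(\psi,\cdot)$ for fixed $\psi$, $\hat\theta_\psi=(\psi,\hat\lambda_\psi)$. Let $j(\theta)=-\partial^2 l/\partial\theta\partial\theta^\top$, $\hat\jmath=j(\hat\theta)$, and $j_{\lambda\lambda}$, $j_{\lambda\psi}$ its nuisance–nuisance and nuisance–interest blocks; $\tilde\jmath_{\lambda\lambda}=j_{\lambda\lambda}(\psi,\hat\lambda_\psi)$, $\tilde\jmath_{\lambda\psi}=j_{\lambda\psi}(\psi,\hat\lambda_\psi)$, viewed as functions of $\psi$, with $d/d\psi$ the total derivative. Let $l_{\mathrm p}(\psi)=l(\psi,\hat\lambda_\psi)$,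 $\zeta_k(\psi)=d^kl_{\mathrm p}(\psi)/d\psi^k$, $\kappa_k(\psi)=\zeta_k(\psi)/\{-\zeta_2(\psi)\}^{k/2}$, and $\gamma_k(\psi)=d^k\log|j_{\lambda\lambda}(\psi,\hat\lambda_\psi)|/d\psi^k$. Assumptions: (A1) all $k$-th order partial derivatives of $l$ with respect to the components of $\theta$, $k>1$, are $O_p(n)$ at $\hat\theta$; (A2) $\hat\theta-\theta_0=O_p(n^{-1/2})$; (A3) the eigenvalues of $\hat\jmath/n$, $j(\hat\theta_{\psi_0})/n$, $n\hat\jmath^{-1}$, $n\,j^{-1}(\hat\theta_{\psi_0})$ are positive and $O_p(1)$. *)

theory Defs
  imports "HOL-Probability.Probability"
begin

text \<open>Parameter theta = (psi, lambda) with psi real and lambda in real^'m (p - 1 = CARD('m)).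
  Coordinates of theta are indexed by 'm option: None is psi, Some i is lambda_i.\<close>

definition coord :: "real \<times> (real^'m) \<Rightarrow> 'm option \<Rightarrow> real" where
  "coord th j = (case j of None \<Rightarrow> fst th | Some i \<Rightarrow> snd th $ i)"

definition upd :: "real \<times> (real^'m) \<Rightarrow> 'm option \<Rightarrow> real \<Rightarrow> real \<times> (real^'m)" where
  "upd th j t = (case j of None \<Rightarrow> (t, snd th)
                 | Some i \<Rightarrow> (fst th, \<chi> k. if k = i then t else snd th $ k))"

definition pd :: "(real \<times> (real^'m) \<Rightarrow> real) \<Rightarrow> 'm option \<Rightarrow> real \<times> (real^'m) \<Rightarrow> real" where
  "pd f j th = deriv (\<lambda>t. f (upd th j t)) (coord th j)"

fun pds :: "(real \<times> (real^'m) \<Rightarrow> real) \<Rightarrow> 'm option list \<Rightarrow> real \<times> (real^'m) \<Rightarrow> real" where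
  "pds f [] = f"
| "pds f (j # js) = pd (pds f js) j"

definition smooth_fun :: "(real \<times> (real^'m) \<Rightarrow> real) \<Rightarrow> bool" where
  "smooth_fun f \<longleftrightarrow> (\<forall>js. continuous_on UNIV (pds f js) \<and>
      (\<forall>j th. (\<lambda>t. pds f js (upd th j t)) differentiable (at (coord th j))))"

definition obs_info :: "(real \<times> (real^'m) \<Rightarrow> real) \<Rightarrow> real \<times> (real^'m) \<Rightarrow> real^('m option)^('m option)" where
  "obs_info f th = (\<chi> a b. - pds f [a, b] th)"

definition info_ll :: "(real \<times> (real^'m) \<Rightarrow> real) \<Rightarrow> real \<times> (real^'m) \<Rightarrow> real^'m^'m" where
  "info_ll f th = (\<chi> i k. - pds f [Some i, Some k] th)"

definition info_lp :: "(real \<times> (real^'m) \<Rightarrow> real) \<Rightarrow> real \<times> (real^'m) \<Rightarrow> real^'m" where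
  "info_lp f th = (\<chi> i. - pds f [Some i, None] th)"

definition zeta :: "(real \<times> (real^'m) \<Rightarrow> real) \<Rightarrow> (real \<Rightarrow> real^'m) \<Rightarrow> nat \<Rightarrow> real \<Rightarrow> real" where
  "zeta f lam k psi = (deriv ^^ k) (\<lambda>t. f (t, lam t)) psi"

definition kappa :: "(real \<times> (real^'m) \<Rightarrow> real) \<Rightarrow> (real \<Rightarrow> real^'m) \<Rightarrow> nat \<Rightarrow> real \<Rightarrow> real" where
  "kappa f lam k psi = zeta f lam k psi / (- zeta f lam 2 psi) powr (real k / 2)"

definition gam :: "(real \<times> (real^'m) \<Rightarrow> real) \<Rightarrow> (real \<Rightarrow> real^'m) \<Rightarrow> nat \<Rightarrow> real \<Rightarrow> real" where
  "gam f lam k psi = (deriv ^^ k) (\<lambda>t. ln (det (info_ll f (t, lam t)))) psi"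

definition mat_eigenvalue :: "real^'k^'k \<Rightarrow> real \<Rightarrow> bool" where
  "mat_eigenvalue A e \<longleftrightarrow> (\<exists>v. v \<noteq> 0 \<and> A *v v = e *\<^sub>R v)"

text \<open>Stochastic order X_n = O_p(a_n) (with outer probability, no measurability needed).\<close>
definition Op :: "'a measure \<Rightarrow> (nat \<Rightarrow> 'a \<Rightarrow> 'b::real_normed_vector) \<Rightarrow> (nat \<Rightarrow> real) \<Rightarrow> bool" where
  "Op M X a \<longleftrightarrow> (\<forall>\<epsilon>>0. \<exists>C N. \<forall>n\<ge>N. \<exists>A\<in>sets M.
      {\<omega>\<in>space M. norm (X n \<omega>) > C * a n} \<subseteq> A \<and> measure M A < \<epsilon>)"

definition Op_eig :: "'a measure \<Rightarrow> (nat \<Rightarrow> 'a \<Rightarrow> real^'k^'k) \<Rightarrow> (nat \<Rightarrow> real) \<Rightarrow> bool" where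
  "Op_eig M A a \<longleftrightarrow> (\<forall>\<epsilon>>0. \<exists>C N. \<forall>n\<ge>N. \<exists>B\<in>sets M.
      {\<omega>\<in>space M. \<exists>e. mat_eigenvalue (A n \<omega>) e \<and> \<bar>e\<bar> > C * a n} \<subseteq> B \<and> measure M B < \<epsilon>)"

end

theory Submission
  imports Defs
begin

definition mk :: "('m option \<Rightarrow> real) \<Rightarrow> real \<times> (real^'m)" where
  "mk g = (g None, \<chi> i. g (Some i))"

lemma coord_mk[simp]: "coord (mk g) c = g c"
  by (simp add: mk_def coord_def split: option.splits)

lemma coord_inject: "(\<And>c. coord x c = coord y c) \<Longrightarrow> x = y"
proof -
  assume h: "\<And>c. coord x c = coord y c"
  have "fst x = fst y" using h[of None] by (simp add: coord_def)
  moreover have "snd x = snd y" using h by (simp add: coord_def vec_eq_iff) (metis option.simps(5))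
  ultimately show ?thesis by (simp add: prod_eq_iff)
qed

lemma mk_coord[simp]: "mk (coord th) = th"
  by (rule coord_inject) simp

lemma coord_add[simp]: "coord (x + y) c = coord x c + coord y c"
  by (simp add: coord_def split: option.splits)
lemma coord_diff[simp]: "coord (x - y) c = coord x c - coord y c"
  by (simp add: coord_def split: option.splits)
lemma coord_zero[simp]: "coord 0 c = 0"
  by (simp add: coord_def split: option.splits)
lemma coord_scaleR[simp]: "coord (a *\<^sub>R x) c = a * coord x c"
  by (simp add: coord_def split: option.splits)
lemma coord_upd[simp]: "coord (upd th j t) c = (if c = j then t else coord th c)"
  by (auto simp: coord_def upd_def split: option.splits)
lemma coord_Pair_None[simp]: "coord (a, b) None = a"
  by (simp add: coord_def)
lemma coord_Pair_Some[simp]: "coord (a, b) (Some i) = b $ i"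
  by (simp add: coord_def)

lemma upd_coord[simp]: "upd th j (coord th j) = th"
  by (rule coord_inject) simp
lemma upd_upd_same[simp]: "upd (upd th j s) j t = upd th j t"
  by (rule coord_inject) simp
lemma upd_comm: "a \<noteq> b \<Longrightarrow> upd (upd th a s) b t = upd (upd th b t) a s"
  by (rule coord_inject) simp

lemma sum_option: "sum g (UNIV :: ('m::finite) option set) = g None + (\<Sum>i\<in>UNIV. g (Some i))"
proof -
  have "sum g (UNIV :: 'm option set) = sum g (insert None (range Some))"
    by (simp add: UNIV_option_conv)
  also have "\<dots> = g None + sum g (range Some)"
    by (subst sum.insert) auto
  also have "sum g (range Some) = (\<Sum>i\<in>UNIV. g (Some i))"
    by (subst sum.reindex) (auto simp: inj_on_def)
  finally show ?thesis .
qed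

lemma abs_coord_le: "\<bar>coord x c\<bar> \<le> norm x"
proof (cases x)
  case (Pair a b)
  show ?thesis
  proof (cases c)
    case None
    then show ?thesis using Pair norm_fst_le[of a b] by simp
  next
    case (Some i)
    have "\<bar>b $ i\<bar> \<le> norm b" using Finite_Cartesian_Product.norm_nth_le[of b i] by simp
    also have "norm b \<le> norm (a, b)" by (rule norm_snd_le)
    finally show ?thesis using Pair Some by simp
  qed
qed

lemma norm_le_sum_coord: "norm x \<le> (\<Sum>c\<in>UNIV. \<bar>coord x c\<bar>)"
proof (cases x)
  case (Pair a b)
  have "norm x \<le> \<bar>a\<bar> + norm b" by (metis Pair norm_Pair_le real_norm_def)
  also have "\<dots> \<le> \<bar>a\<bar> + (\<Sum>i\<in>UNIV. \<bar>b$i\<bar>)" using norm_le_l1_cart[of b] by simp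
  also have "\<dots> = (\<Sum>c\<in>UNIV. \<bar>coord x c\<bar>)" using Pair by (simp add: sum_option)
  finally show ?thesis .
qed

lemma bounded_linear_coord: "bounded_linear (\<lambda>h::real \<times> (real^'m). coord h c)"
  by (rule bounded_linear_intro[of _ 1]) (auto simp: abs_coord_le)

lemma pds_append: "pds (pds f js) js' = pds f (js' @ js)"
  by (induction js') auto

lemma smooth_pds: "smooth_fun f \<Longrightarrow> smooth_fun (pds f js)"
  unfolding smooth_fun_def by (simp add: pds_append)

lemma smooth_cont: "smooth_fun f \<Longrightarrow> isCont (pds f js) x"
  unfolding smooth_fun_def by (metis continuous_on_eq_continuous_at open_UNIV UNIV_I)

lemma smooth_cont0: "smooth_fun f \<Longrightarrow> isCont f x"
  using smooth_cont[where js="[]"] by simp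

lemma smooth_line_deriv:
  assumes "smooth_fun f"
  shows "((\<lambda>t. f (upd th c t)) has_real_derivative pd f c (upd th c t0)) (at t0)"
proof -
  let ?th = "upd th c t0"
  have "(\<lambda>t. pds f [] (upd ?th c t)) differentiable (at (coord ?th c))"
    using assms unfolding smooth_fun_def by blast
  then have d: "(\<lambda>t. f (upd th c t)) differentiable (at t0)" by simp
  have "pd f c ?th = deriv (\<lambda>t. f (upd th c t)) t0" by (simp add: pd_def)
  then show ?thesis using d by (simp add: DERIV_deriv_iff_real_differentiable)
qed

lemma mvt_abs:
  fixes f :: "real \<Rightarrow> real"
  assumes "\<And>x. (f has_real_derivative f' x) (at x)"
  shows "\<exists>z. \<bar>z - a\<bar> \<le> \<bar>b - a\<bar> \<and> f b - f a = (b - a) * f' z"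
proof (cases a b rule: linorder_cases)
  case less
  then obtain z where "z > a" "z < b" "f b - f a = (b - a) * f' z"
    using MVT2[of a b f f'] assms by blast
  then show ?thesis by (intro exI[of _ z]) auto
next
  case equal then show ?thesis by auto
next
  case greater
  then obtain z where "z > b" "z < a" "f a - f b = (a - b) * f' z"
    using MVT2[of b a f f'] assms by blast
  then show ?thesis by (intro exI[of _ z]) (auto simp: algebra_simps)
qed

lemma frechet_aux:
  fixes f :: "real \<times> (real^'m) \<Rightarrow> real"
  assumes sm: "smooth_fun f" and fin: "finite S"
  shows "\<forall>e>0. \<exists>d>0. \<forall>h. norm h < d \<longrightarrow>
    \<bar>f (th + mk (\<lambda>c. if c \<in> S then coord h c else 0)) - f th - (\<Sum>c\<in>S. pd f c th * coord h c)\<bar> \<le> e * norm h"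
  using fin
proof (induction S rule: finite_induct)
  case empty
  have "mk (\<lambda>c. 0) = (0::real \<times> (real^'m))" by (rule coord_inject) simp
  then show ?case by (auto intro: exI[of _ 1])
next
  case (insert c S)
  show ?case
  proof (intro allI impI)
    fix e :: real assume e: "e > 0"
    obtain d2 where d2: "d2 > 0" and
      H2: "\<And>h. norm h < d2 \<Longrightarrow> \<bar>f (th + mk (\<lambda>c. if c \<in> S then coord h c else 0)) - f th - (\<Sum>c\<in>S. pd f c th * coord h c)\<bar> \<le> e/2 * norm h"
      using insert.IH e by (meson half_gt_zero)
    have "isCont (pd f c) th" using smooth_cont[OF sm, where js="[c]"] by simp
    then obtain d1 where d1: "d1 > 0" and
      H1: "\<And>x. dist x th < d1 \<Longrightarrow> dist (pd f c x) (pd f c th) < e/2"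
      using e unfolding continuous_at_eps_delta by (meson half_gt_zero)
    define K where "K = real (card (UNIV :: 'm option set))"
    have K0: "K \<ge> 0" by (simp add: K_def)
    define d where "d = min d2 (d1 / (K + 1))"
    have "d > 0" using d1 d2 K0 by (simp add: d_def)
    moreover have "\<forall>h. norm h < d \<longrightarrow>
      \<bar>f (th + mk (\<lambda>d. if d \<in> insert c S then coord h d else 0)) - f th - (\<Sum>d\<in>insert c S. pd f d th * coord h d)\<bar> \<le> e * norm h"
    proof (intro allI impI)
      fix h :: "real \<times> (real^'m)" assume hd: "norm h < d"
      define p where "p = th + mk (\<lambda>d. if d \<in> S then coord h d else 0)"
      have pc: "coord p c = coord th c" using insert.hyps by (simp add: p_def)
      have p': "th + mk (\<lambda>d. if d \<in> insert c S then coord h d else 0) = upd p c (coord th c + coord h c)"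
        by (rule coord_inject) (auto simp: p_def)
      obtain z where z: "\<bar>z - coord th c\<bar> \<le> \<bar>coord th c + coord h c - coord th c\<bar>"
        and zeq: "f (upd p c (coord th c + coord h c)) - f (upd p c (coord th c)) = (coord th c + coord h c - coord th c) * pd f c (upd p c z)"
        using mvt_abs[of "\<lambda>t. f (upd p c t)" "\<lambda>t. pd f c (upd p c t)" "coord th c" "coord th c + coord h c"]
          smooth_line_deriv[OF sm, of p c] by blast
      have fp: "f (upd p c (coord th c)) = f p" using pc by (metis upd_coord)
      have "norm (upd p c z - th) \<le> (\<Sum>d\<in>UNIV. \<bar>coord (upd p c z - th) d\<bar>)" by (rule norm_le_sum_coord)
      also have "\<dots> \<le> (\<Sum>d\<in>(UNIV::'m option set). norm h)"
      proof (rule sum_mono)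
        fix d :: "'m option"
        show "\<bar>coord (upd p c z - th) d\<bar> \<le> norm h"
          using z abs_coord_le[of h d] insert.hyps by (auto simp: p_def)
      qed
      also have "\<dots> = K * norm h" by (simp add: K_def)
      also have "\<dots> \<le> K * (d1 / (K + 1))" using hd K0 by (intro mult_left_mono) (auto simp: d_def)
      also have "\<dots> < d1" using K0 d1 by (simp add: field_simps)
      finally have "dist (upd p c z) th < d1" by (simp add: dist_norm)
      then have pdb: "\<bar>pd f c (upd p c z) - pd f c th\<bar> \<le> e/2" using H1 by (simp add: dist_real_def less_imp_le)
      have hc: "\<bar>coord h c\<bar> \<le> norm h" by (rule abs_coord_le)
      have ih: "\<bar>f p - f th - (\<Sum>c\<in>S. pd f c th * coord h c)\<bar> \<le> e/2 * norm h"
        using H2[of h] hd by (simp add: d_def p_def)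
      have "f (th + mk (\<lambda>d. if d \<in> insert c S then coord h d else 0)) - f th - (\<Sum>d\<in>insert c S. pd f d th * coord h d)
          = (f p - f th - (\<Sum>c\<in>S. pd f c th * coord h c)) + coord h c * (pd f c (upd p c z) - pd f c th)"
        using zeq fp p' insert.hyps by (simp add: algebra_simps)
      also have "\<bar>\<dots>\<bar> \<le> e/2 * norm h + \<bar>coord h c\<bar> * (e/2)"
      proof -
        have "\<bar>coord h c * (pd f c (upd p c z) - pd f c th)\<bar> \<le> \<bar>coord h c\<bar> * (e/2)"
          unfolding abs_mult using pdb by (intro mult_left_mono) auto
        then show ?thesis by (rule order_trans[OF abs_triangle_ineq add_mono[OF ih]])
      qed
      also have "\<dots> \<le> e/2 * norm h + norm h * (e/2)"
        using hc e by (intro add_left_mono mult_right_mono) auto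
      finally show "\<bar>f (th + mk (\<lambda>d. if d \<in> insert c S then coord h d else 0)) - f th - (\<Sum>d\<in>insert c S. pd f d th * coord h d)\<bar> \<le> e * norm h"
        by simp
    qed
    ultimately show "\<exists>d>0. \<forall>h. norm h < d \<longrightarrow>
      \<bar>f (th + mk (\<lambda>d. if d \<in> insert c S then coord h d else 0)) - f th - (\<Sum>d\<in>insert c S. pd f d th * coord h d)\<bar> \<le> e * norm h"
      by blast
  qed
qed

lemma frechet:
  fixes f :: "real \<times> (real^'m) \<Rightarrow> real"
  assumes sm: "smooth_fun f"
  shows "(f has_derivative (\<lambda>h. \<Sum>c\<in>UNIV. pd f c th * coord h c)) (at th)"
proof -
  have bl: "bounded_linear (\<lambda>h::real \<times> (real^'m). \<Sum>c\<in>UNIV. pd f c th * coord h c)"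
    by (intro bounded_linear_sum bounded_linear_const_mult bounded_linear_coord)
  have A: "\<forall>e>0. \<exists>d>0. \<forall>h. norm h < d \<longrightarrow>
    \<bar>f (th + h) - f th - (\<Sum>c\<in>UNIV. pd f c th * coord h c)\<bar> \<le> e * norm h"
    using frechet_aux[OF sm, of UNIV th] by simp
  show ?thesis unfolding has_derivative_at'
  proof (intro conjI bl allI impI)
    fix e :: real assume e: "e > 0"
    obtain d where d: "d > 0" and H: "\<And>h. norm h < d \<Longrightarrow>
      \<bar>f (th + h) - f th - (\<Sum>c\<in>UNIV. pd f c th * coord h c)\<bar> \<le> e/2 * norm h"
      using A e by (meson half_gt_zero)
    show "\<exists>d>0. \<forall>x'. 0 < norm (x' - th) \<and> norm (x' - th) < d \<longrightarrow>
      norm (f x' - f th - (\<Sum>c\<in>UNIV. pd f c th * coord (x' - th) c)) / norm (x' - th) < e"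
    proof (intro exI[of _ d] conjI allI impI d)
      fix x' assume x': "0 < norm (x' - th) \<and> norm (x' - th) < d"
      have "\<bar>f x' - f th - (\<Sum>c\<in>UNIV. pd f c th * coord (x' - th) c)\<bar> \<le> e/2 * norm (x' - th)"
        using H[of "x' - th"] x' by simp
      then have "\<bar>f x' - f th - (\<Sum>c\<in>UNIV. pd f c th * coord (x' - th) c)\<bar> / norm (x' - th) \<le> e/2"
        using x' by (simp add: divide_le_eq)
      then show "norm (f x' - f th - (\<Sum>c\<in>UNIV. pd f c th * coord (x' - th) c)) / norm (x' - th) < e"
        using e unfolding real_norm_def by linarith
    qed
  qed
qed

lemma vec_has_derivative:
  fixes lam :: "real \<Rightarrow> real^'m"
  assumes dl: "\<And>i. ((\<lambda>t. lam t $ i) has_real_derivative d $ i) (at psi)"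
  shows "(lam has_derivative (\<lambda>h. h *\<^sub>R d)) (at psi)"
proof -
  have "\<forall>i\<in>Basis. ((\<lambda>x. lam x \<bullet> i) has_derivative (\<lambda>x. (x *\<^sub>R d) \<bullet> i)) (at psi)"
  proof
    fix i :: "real^'m" assume "i \<in> Basis"
    then obtain j where j: "i = axis j 1" unfolding Basis_vec_def by auto
    have "((\<lambda>t. lam t $ j) has_derivative (\<lambda>h. d $ j * h)) (at psi)"
      using dl[of j] by (simp add: has_field_derivative_def)
    then show "((\<lambda>x. lam x \<bullet> i) has_derivative (\<lambda>x. (x *\<^sub>R d) \<bullet> i)) (at psi)"
      using j by (simp add: inner_axis mult.commute)
  qed
  then show ?thesis using has_derivative_componentwise_within[of lam _ psi UNIV] by simp
qed

lemma chain_rule: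
  fixes f :: "real \<times> (real^'m) \<Rightarrow> real" and lam :: "real \<Rightarrow> real^'m"
  assumes sm: "smooth_fun f" and dl: "\<And>i. ((\<lambda>t. lam t $ i) has_real_derivative d $ i) (at psi)"
  shows "((\<lambda>t. f (t, lam t)) has_real_derivative
    (pd f None (psi, lam psi) + (\<Sum>i\<in>UNIV. pd f (Some i) (psi, lam psi) * d $ i))) (at psi)"
proof -
  have g: "((\<lambda>t. (t, lam t)) has_derivative (\<lambda>h. (h, h *\<^sub>R d))) (at psi)"
    by (intro has_derivative_Pair has_derivative_ident vec_has_derivative dl)
  have c: "((\<lambda>t. f (t, lam t)) has_derivative
      (\<lambda>h. \<Sum>c\<in>UNIV. pd f c (psi, lam psi) * coord (h, h *\<^sub>R d) c)) (at psi)"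
    using has_derivative_compose[OF g frechet[OF sm]] by simp
  have e: "(\<lambda>h. \<Sum>c\<in>UNIV. pd f c (psi, lam psi) * coord (h, h *\<^sub>R d) c) =
     (\<lambda>h. (pd f None (psi, lam psi) + (\<Sum>i\<in>UNIV. pd f (Some i) (psi, lam psi) * d $ i)) * h)"
    by (rule ext) (simp add: sum_option algebra_simps sum_distrib_left sum_distrib_right)
  show ?thesis using c unfolding e has_field_derivative_def by (simp add: mult.commute)
qed

lemma pd_zero_at_max:
  fixes f :: "real \<times> (real^'m) \<Rightarrow> real"
  assumes sm: "smooth_fun f" and mx: "\<And>t. f (upd th c t) \<le> f th"
  shows "pd f c th = 0"
proof -
  have "((\<lambda>t. f (upd th c t)) has_real_derivative pd f c (upd th c (coord th c))) (at (coord th c))"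
    by (rule smooth_line_deriv[OF sm])
  then have d: "((\<lambda>t. f (upd th c t)) has_real_derivative pd f c th) (at (coord th c))" by simp
  show ?thesis
    by (rule DERIV_local_max[OF d, of 1]) (auto simp: mx)
qed

lemma pt_dist:
  fixes th :: "real \<times> (real^'m)"
  assumes ab: "a \<noteq> b"
  shows "norm (upd (upd th a s) b t - th) \<le> \<bar>s - coord th a\<bar> + \<bar>t - coord th b\<bar>"
proof -
  have "norm (upd (upd th a s) b t - th) \<le> (\<Sum>c\<in>UNIV. \<bar>coord (upd (upd th a s) b t - th) c\<bar>)"
    by (rule norm_le_sum_coord)
  also have "\<dots> \<le> (\<Sum>c\<in>UNIV. (if c = a then \<bar>s - coord th a\<bar> else 0) + (if c = b then \<bar>t - coord th b\<bar> else 0))"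
    by (rule sum_mono) (use ab in auto)
  also have "\<dots> = \<bar>s - coord th a\<bar> + \<bar>t - coord th b\<bar>"
    by (simp add: sum.distrib)
  finally show ?thesis .
qed

lemma schwarz_aux:
  fixes f :: "real \<times> (real^'m) \<Rightarrow> real" and th :: "real \<times> (real^'m)" and h :: real
  assumes sm: "smooth_fun f" and ab: "a \<noteq> b"
  defines "pt \<equiv> \<lambda>s t. upd (upd th a s) b t"
  shows "\<exists>\<sigma> \<tau>. \<bar>\<sigma> - coord th a\<bar> \<le> \<bar>h\<bar> \<and> \<bar>\<tau> - coord th b\<bar> \<le> \<bar>h\<bar> \<and>
    f (pt (coord th a + h) (coord th b + h)) - f (pt (coord th a + h) (coord th b))
    - f (pt (coord th a) (coord th b + h)) + f (pt (coord th a) (coord th b))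
    = h * h * pds f [b, a] (pt \<sigma> \<tau>)"
proof -
  define s0 where "s0 = coord th a"
  define t0 where "t0 = coord th b"
  have ds: "((\<lambda>s. f (pt s t)) has_real_derivative pd f a (pt s' t)) (at s')" for t s'
  proof -
    have e: "(\<lambda>s. f (pt s t)) = (\<lambda>s. f (upd (upd th b t) a s))"
      using ab by (simp add: pt_def upd_comm)
    have "pt s' t = upd (upd th b t) a s'" using ab by (simp add: pt_def upd_comm)
    then show ?thesis unfolding e by (simp add: smooth_line_deriv[OF sm])
  qed
  define phi where "phi = (\<lambda>s. f (pt s (t0 + h)) - f (pt s t0))"
  have dphi: "(phi has_real_derivative (pd f a (pt s (t0 + h)) - pd f a (pt s t0))) (at s)" for s
    unfolding phi_def by (intro DERIV_diff ds)
  obtain \<sigma> where s1: "\<bar>\<sigma> - s0\<bar> \<le> \<bar>s0 + h - s0\<bar>"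
    and s2: "phi (s0 + h) - phi s0 = (s0 + h - s0) * (pd f a (pt \<sigma> (t0 + h)) - pd f a (pt \<sigma> t0))"
    using mvt_abs[OF dphi, of s0 "s0 + h"] by blast
  have dt: "((\<lambda>t. pd f a (pt \<sigma> t)) has_real_derivative pds f [b, a] (pt \<sigma> t)) (at t)" for t
  proof -
    have "((\<lambda>t. pds f [a] (upd (upd th a \<sigma>) b t)) has_real_derivative pd (pds f [a]) b (upd (upd th a \<sigma>) b t)) (at t)"
      by (rule smooth_line_deriv[OF smooth_pds[OF sm]])
    then show ?thesis by (simp add: pt_def)
  qed
  obtain \<tau> where t1: "\<bar>\<tau> - t0\<bar> \<le> \<bar>t0 + h - t0\<bar>"
    and t2: "pd f a (pt \<sigma> (t0 + h)) - pd f a (pt \<sigma> t0) = (t0 + h - t0) * pds f [b, a] (pt \<sigma> \<tau>)"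
    using mvt_abs[OF dt, of t0 "t0 + h"] by blast
  show ?thesis
    apply (rule exI[of _ \<sigma>], rule exI[of _ \<tau>])
    using s1 s2 t1 t2 unfolding s0_def[symmetric] t0_def[symmetric] phi_def
    by (simp add: algebra_simps)
qed

lemma aux_abs_contra: "(X::real) \<le> Y + Z \<Longrightarrow> Y < X / 2 \<Longrightarrow> Z < X / 2 \<Longrightarrow> False"
  by linarith

lemma schwarz:
  fixes f :: "real \<times> (real^'m) \<Rightarrow> real"
  assumes sm: "smooth_fun f"
  shows "pds f [a, b] th = pds f [b, a] th"
proof (cases "a = b")
  case True then show ?thesis by simp
next
  case ab: False
  define pt where "pt = (\<lambda>s t. upd (upd th a s) b t)"
  have ptc: "pt s t = upd (upd th b t) a s" for s t using ab by (simp add: pt_def upd_comm)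
  show ?thesis
  proof (rule ccontr)
    assume ne: "pds f [a, b] th \<noteq> pds f [b, a] th"
    define e where "e = \<bar>pds f [a, b] th - pds f [b, a] th\<bar> / 2"
    have e0: "e > 0" using ne by (simp add: e_def)
    obtain d1 where d1: "d1 > 0" and H1: "\<And>x. dist x th < d1 \<Longrightarrow> dist (pds f [a, b] x) (pds f [a, b] th) < e"
      using smooth_cont[OF sm, where js="[a, b]" and x=th] e0 unfolding continuous_at_eps_delta by blast
    obtain d2 where d2: "d2 > 0" and H2: "\<And>x. dist x th < d2 \<Longrightarrow> dist (pds f [b, a] x) (pds f [b, a] th) < e"
      using smooth_cont[OF sm, where js="[b, a]" and x=th] e0 unfolding continuous_at_eps_delta by blast
    define h where "h = min d1 d2 / 4"
    have h0: "h > 0" using d1 d2 by (simp add: h_def)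
    obtain \<sigma> \<tau> where st: "\<bar>\<sigma> - coord th a\<bar> \<le> \<bar>h\<bar>" "\<bar>\<tau> - coord th b\<bar> \<le> \<bar>h\<bar>"
      and D1: "f (pt (coord th a + h) (coord th b + h)) - f (pt (coord th a + h) (coord th b))
    - f (pt (coord th a) (coord th b + h)) + f (pt (coord th a) (coord th b))
    = h * h * pds f [b, a] (pt \<sigma> \<tau>)"
      using schwarz_aux[OF sm ab, of th h] unfolding pt_def by blast
    define qt where "qt = (\<lambda>t s. upd (upd th b t) a s)"
    obtain \<tau>' \<sigma>' where st': "\<bar>\<tau>' - coord th b\<bar> \<le> \<bar>h\<bar>" "\<bar>\<sigma>' - coord th a\<bar> \<le> \<bar>h\<bar>"
      and D2: "f (qt (coord th b + h) (coord th a + h)) - f (qt (coord th b + h) (coord th a))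
    - f (qt (coord th b) (coord th a + h)) + f (qt (coord th b) (coord th a))
    = h * h * pds f [a, b] (qt \<tau>' \<sigma>')"
      using schwarz_aux[OF sm, of b a th h] ab unfolding qt_def by fastforce
    have qp: "qt t s = pt s t" for s t by (simp add: qt_def ptc)
    have "h * h * pds f [b, a] (pt \<sigma> \<tau>) = h * h * pds f [a, b] (pt \<sigma>' \<tau>')"
      using D1 D2 unfolding qp by (simp add: algebra_simps)
    then have eq: "pds f [b, a] (pt \<sigma> \<tau>) = pds f [a, b] (pt \<sigma>' \<tau>')" using h0 by simp
    have "norm (pt \<sigma> \<tau> - th) \<le> 2 * h" using pt_dist[OF ab, of th \<sigma> \<tau>] st h0 unfolding pt_def by simp
    then have "dist (pt \<sigma> \<tau>) th < d2" using h0 d1 d2 by (simp add: dist_norm h_def)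
    then have c2: "\<bar>pds f [b, a] (pt \<sigma> \<tau>) - pds f [b, a] th\<bar> < e" using H2 by (simp add: dist_real_def)
    have "norm (pt \<sigma>' \<tau>' - th) \<le> 2 * h" using pt_dist[OF ab, of th \<sigma>' \<tau>'] st' h0 unfolding pt_def by simp
    then have "dist (pt \<sigma>' \<tau>') th < d1" using h0 d1 d2 by (simp add: dist_norm h_def)
    then have c1: "\<bar>pds f [a, b] (pt \<sigma>' \<tau>') - pds f [a, b] th\<bar> < e" using H1 by (simp add: dist_real_def)
    have "\<bar>pds f [a, b] th - pds f [b, a] th\<bar> \<le> \<bar>pds f [a, b] (pt \<sigma>' \<tau>') - pds f [a, b] th\<bar> + \<bar>pds f [b, a] (pt \<sigma> \<tau>) - pds f [b, a] th\<bar>"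
      using eq by (simp add: abs_if)
    from aux_abs_contra[OF this c1[unfolded e_def] c2[unfolded e_def]] show False .
  qed
qed

lemma sym_inner:
  fixes S :: "real^'k^'k"
  assumes sym: "transpose S = S"
  shows "x \<bullet> (S *v y) = (S *v x) \<bullet> y"
proof -
  have "x \<bullet> (S *v y) = (x v* S) \<bullet> y" by (simp add: dot_lmul_matrix)
  also have "x v* S = transpose S *v x" by simp
  finally show ?thesis using sym by simp
qed

lemma quad_zero:
  fixes b c :: real
  assumes h: "\<And>t. 0 \<le> 2 * t * b + t * t * c"
  shows "b = 0"
proof (rule ccontr)
  assume b: "b \<noteq> 0"
  have c: "c \<ge> 0" using h[of 1] h[of "-1"] by simp
  have c1: "c + 1 \<noteq> 0" using c by simp
  define t where "t = - b / (c + 1)"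
  have tc: "t * (c + 1) = - b" using c1 by (simp add: t_def)
  have "(c + 1) * (c + 1) * (2 * t * b + t * t * c) = 2 * b * (t * (c + 1)) * (c + 1) + (t * (c + 1)) * (t * (c + 1)) * c"
    by (simp add: algebra_simps)
  also have "\<dots> = - (b * b * (c + 2))" unfolding tc by (simp add: algebra_simps)
  also have "\<dots> < 0"
  proof -
    have "b * b > 0" using b not_real_square_gt_zero[of b] by linarith
    then show ?thesis using c by (simp add: mult_pos_pos)
  qed
  finally have "(c + 1) * (c + 1) * (2 * t * b + t * t * c) < 0" .
  moreover have "(c + 1) * (c + 1) * (2 * t * b + t * t * c) \<ge> 0" using h[of t] c by simp
  ultimately show False by simp
qed

lemma rayleigh:
  fixes S :: "real^'k^'k"
  assumes sym: "transpose S = S"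
  shows "\<exists>\<mu> v0. v0 \<noteq> 0 \<and> S *v v0 = \<mu> *\<^sub>R v0 \<and> (\<forall>v. \<mu> * (v \<bullet> v) \<le> v \<bullet> (S *v v))"
proof -
  let ?q = "\<lambda>v::real^'k. v \<bullet> (S *v v)"
  have cq: "continuous_on (sphere 0 1) ?q"
    by (intro continuous_intros linear_continuous_on matrix_vector_mul_linear)
  obtain i :: 'k where True by blast
  have ne: "sphere (0::real^'k) 1 \<noteq> {}" using norm_axis_1[of i] by (auto simp: sphere_def dist_norm intro!: exI[of _ "axis i 1"])
  obtain v0 where v0s: "v0 \<in> sphere 0 1" and mn: "\<And>y. y \<in> sphere 0 1 \<Longrightarrow> ?q v0 \<le> ?q y"
    using continuous_attains_inf[OF compact_sphere ne cq] by blast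
  define \<mu> where "\<mu> = ?q v0"
  have nv0: "norm v0 = 1" using v0s by (simp add: sphere_def dist_norm)
  have v0v0: "v0 \<bullet> v0 = 1" using nv0 by (simp add: dot_square_norm)
  have all: "\<mu> * (v \<bullet> v) \<le> ?q v" for v
  proof (cases "v = 0")
    case True then show ?thesis by simp
  next
    case False
    define u where "u = (1 / norm v) *\<^sub>R v"
    have "u \<in> sphere 0 1" using False by (simp add: u_def sphere_def dist_norm)
    then have "\<mu> \<le> ?q u" using mn by (simp add: \<mu>_def)
    then have "norm v * norm v * \<mu> \<le> norm v * norm v * ?q u" by (simp add: mult_left_mono)
    also have "norm v * norm v * ?q u = ?q v"
      using False by (simp add: u_def matrix_vector_mult_scaleR)
    finally show ?thesis by (simp add: dot_square_norm power2_eq_square mult.commute)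
  qed
  have orth: "w \<bullet> (S *v v0 - \<mu> *\<^sub>R v0) = 0" for w
  proof (rule quad_zero[where c = "?q w - \<mu> * (w \<bullet> w)"])
    fix t :: real
    define a where "a = w \<bullet> v0"
    define bb where "bb = w \<bullet> (S *v v0)"
    define ww where "ww = w \<bullet> w"
    define qw where "qw = ?q w"
    have sw: "v0 \<bullet> (S *v w) = w \<bullet> (S *v v0)"
      using sym_inner[OF sym, of v0 w] by (simp add: inner_commute)
    have "\<mu> * ((v0 + t *\<^sub>R w) \<bullet> (v0 + t *\<^sub>R w)) \<le> ?q (v0 + t *\<^sub>R w)" by (rule all)
    moreover have "(v0 + t *\<^sub>R w) \<bullet> (v0 + t *\<^sub>R w) = 1 + 2 * t * a + t * t * ww"
      using v0v0 by (simp add: a_def ww_def inner_add_left inner_add_right inner_commute[of v0 w] algebra_simps)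
    moreover have "?q (v0 + t *\<^sub>R w) = \<mu> + 2 * t * bb + t * t * qw"
      using sw by (simp add: \<mu>_def bb_def qw_def inner_add_left inner_add_right matrix_vector_right_distrib
          matrix_vector_mult_scaleR algebra_simps)
    ultimately have ineq: "\<mu> * (1 + 2 * t * a + t * t * ww) \<le> \<mu> + 2 * t * bb + t * t * qw" by simp
    have X: "\<mu> * (1 + 2 * t * a + t * t * ww) - (\<mu> + 2 * t * bb + t * t * qw) = - (2 * t * (bb - \<mu> * a) + t * t * (qw - \<mu> * ww))"
      by (simp add: algebra_simps)
    have Y: "w \<bullet> (S *v v0 - \<mu> *\<^sub>R v0) = bb - \<mu> * a"
      by (simp add: bb_def a_def inner_diff_right)
    show "0 \<le> 2 * t * (w \<bullet> (S *v v0 - \<mu> *\<^sub>R v0)) + t * t * (?q w - \<mu> * (w \<bullet> w))"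
      unfolding Y qw_def[symmetric] ww_def[symmetric] using ineq X by linarith
  qed
  have "S *v v0 = \<mu> *\<^sub>R v0" using orth[of "S *v v0 - \<mu> *\<^sub>R v0"] by simp
  moreover have "v0 \<noteq> 0" using nv0 by auto
  ultimately show ?thesis using all by blast
qed

lemma det_bound:
  fixes A :: "real^'k^'k"
  assumes "\<And>i j. \<bar>A $ i $ j\<bar> \<le> B"
  shows "\<bar>det A\<bar> \<le> real (card {p. p permutes (UNIV::'k set)}) * B ^ CARD('k)"
proof -
  have "\<bar>det A\<bar> \<le> (\<Sum>p\<in>{p. p permutes (UNIV::'k set)}. \<bar>of_int (sign p) * (\<Prod>i\<in>UNIV. A $ i $ p i)\<bar>)"
    unfolding det_def by (rule sum_abs)
  also have "\<dots> \<le> (\<Sum>p\<in>{p. p permutes (UNIV::'k set)}. B ^ CARD('k))"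
  proof (rule sum_mono)
    fix p :: "'k \<Rightarrow> 'k"
    have "\<bar>of_int (sign p) * (\<Prod>i\<in>UNIV. A $ i $ p i)\<bar> = (\<Prod>i\<in>UNIV. \<bar>A $ i $ p i\<bar>)"
      by (simp add: abs_mult sign_def abs_prod)
    also have "\<dots> \<le> (\<Prod>i\<in>(UNIV::'k set). B)" by (rule prod_mono) (use assms in auto)
    finally show "\<bar>of_int (sign p) * (\<Prod>i\<in>UNIV. A $ i $ p i)\<bar> \<le> B ^ CARD('k)" by simp
  qed
  also have "\<dots> = real (card {p. p permutes (UNIV::'k set)}) * B ^ CARD('k)" by simp
  finally show ?thesis .
qed

definition small :: "'a measure \<Rightarrow> (real \<Rightarrow> nat \<Rightarrow> 'a set) \<Rightarrow> bool" where
  "small M B \<longleftrightarrow> (\<forall>\<epsilon>>0. \<exists>C N. \<forall>n\<ge>N. \<exists>A\<in>sets M. B C n \<subseteq> A \<and> measure M A < \<epsilon>)"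

lemma Op_small: "Op M X a \<longleftrightarrow> small M (\<lambda>C n. {\<omega>\<in>space M. norm (X n \<omega>) > C * a n})"
  by (simp add: Op_def small_def)

lemma Op_eig_small: "Op_eig M A a \<longleftrightarrow> small M (\<lambda>C n. {\<omega>\<in>space M. \<exists>e. mat_eigenvalue (A n \<omega>) e \<and> \<bar>e\<bar> > C * a n})"
  by (simp add: Op_eig_def small_def)

lemma small_transfer:
  assumes fin: "finite J" and sm: "\<forall>j\<in>J. small M (Bd j)"
    and tr: "\<And>C. \<exists>C' N0. \<forall>n\<ge>N0. Bad C' n \<subseteq> (\<Union>j\<in>J. Bd j (C j) n)"
  shows "small M Bad"
  unfolding small_def
proof (intro allI impI)
  fix \<epsilon> :: real assume e: "\<epsilon> > 0"
  define e' where "e' = \<epsilon> / (real (card J) + 1)"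
  have e': "e' > 0" using e by (simp add: e'_def)
  have "\<forall>j\<in>J. \<exists>CN. \<forall>n\<ge>snd CN. \<exists>A\<in>sets M. Bd j (fst CN) n \<subseteq> A \<and> measure M A < e'"
    using sm e' unfolding small_def by fastforce
  from bchoice[OF this] obtain CN where CN0: "\<forall>j\<in>J. \<forall>n\<ge>snd (CN j). \<exists>A\<in>sets M. Bd j (fst (CN j)) n \<subseteq> A \<and> measure M A < e'"
    by blast
  have CN: "\<exists>A\<in>sets M. Bd j (fst (CN j)) n \<subseteq> A \<and> measure M A < e'" if "j \<in> J" "n \<ge> snd (CN j)" for j n
    using CN0 that by blast
  obtain C' N0 where C': "\<And>n. n \<ge> N0 \<Longrightarrow> Bad C' n \<subseteq> (\<Union>j\<in>J. Bd j (fst (CN j)) n)"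
    using tr[of "\<lambda>j. fst (CN j)"] by blast
  define N where "N = N0 + (\<Sum>j\<in>J. snd (CN j))"
  have "\<forall>n\<ge>N. \<exists>A\<in>sets M. Bad C' n \<subseteq> A \<and> measure M A < \<epsilon>"
  proof (intro allI impI)
    fix n assume n: "n \<ge> N"
    have nj: "n \<ge> snd (CN j)" if "j \<in> J" for j
    proof -
      have "snd (CN j) \<le> (\<Sum>j\<in>J. snd (CN j))" by (rule member_le_sum[OF that _ fin]) auto
      then show ?thesis using n by (simp add: N_def)
    qed
    have "\<forall>j\<in>J. \<exists>A. A \<in> sets M \<and> Bd j (fst (CN j)) n \<subseteq> A \<and> measure M A < e'"
    proof
      fix j assume j: "j \<in> J"
      from CN[OF j nj[OF j]] show "\<exists>A. A \<in> sets M \<and> Bd j (fst (CN j)) n \<subseteq> A \<and> measure M A < e'"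
        by (auto simp: Bex_def)
    qed
    from bchoice[OF this] obtain A where A0: "\<forall>j\<in>J. A j \<in> sets M \<and> Bd j (fst (CN j)) n \<subseteq> A j \<and> measure M (A j) < e'"
      by blast
    have A: "A j \<in> sets M \<and> Bd j (fst (CN j)) n \<subseteq> A j \<and> measure M (A j) < e'" if "j \<in> J" for j
      using A0 that by blast
    have "(\<Union>j\<in>J. A j) \<in> sets M" using A fin by auto
    moreover have "Bad C' n \<subseteq> (\<Union>j\<in>J. A j)"
    proof -
      have "n \<ge> N0" using n by (simp add: N_def)
      then have "Bad C' n \<subseteq> (\<Union>j\<in>J. Bd j (fst (CN j)) n)" by (rule C')
      also have "\<dots> \<subseteq> (\<Union>j\<in>J. A j)" using A by (intro UN_mono) auto
      finally show ?thesis .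
    qed
    moreover have "measure M (\<Union>j\<in>J. A j) < \<epsilon>"
    proof -
      have "measure M (\<Union>j\<in>J. A j) \<le> (\<Sum>j\<in>J. measure M (A j))"
        using fin A by (intro measure_UNION_le) auto
      also have "\<dots> \<le> (\<Sum>j\<in>J. e')" using A by (intro sum_mono) (simp add: less_imp_le)
      also have "\<dots> = real (card J) * e'" by simp
      also have "\<dots> < \<epsilon>" using e by (simp add: e'_def field_simps)
      finally show ?thesis .
    qed
    ultimately show "\<exists>A\<in>sets M. Bad C' n \<subseteq> A \<and> measure M A < \<epsilon>" by blast
  qed
  then show "\<exists>C N. \<forall>n\<ge>N. \<exists>A\<in>sets M. Bad C n \<subseteq> A \<and> measure M A < \<epsilon>" by blast
qed

lemma Op_family:
  fixes X :: "nat \<Rightarrow> 'a \<Rightarrow> 'b::real_normed_vector" and Y :: "'j \<Rightarrow> nat \<Rightarrow> 'a \<Rightarrow> 'c::real_normed_vector"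
  assumes fin: "finite J" and Y: "\<forall>j\<in>J. Op M (Y j) (b j)"
    and tr: "\<And>C. \<exists>C' N0. \<forall>n\<ge>N0. \<forall>\<omega>\<in>space M. (\<forall>j\<in>J. norm (Y j n \<omega>) \<le> C j * b j n) \<longrightarrow> norm (X n \<omega>) \<le> C' * a n"
  shows "Op M X a"
  unfolding Op_small
proof (rule small_transfer[OF fin])
  show "\<forall>j\<in>J. small M (\<lambda>C n. {\<omega> \<in> space M. C * b j n < norm (Y j n \<omega>)})"
    using Y by (simp add: Op_small)
  fix C
  obtain C' N0 where H: "\<And>n \<omega>. n \<ge> N0 \<Longrightarrow> \<omega> \<in> space M \<Longrightarrow> (\<forall>j\<in>J. norm (Y j n \<omega>) \<le> C j * b j n) \<Longrightarrow> norm (X n \<omega>) \<le> C' * a n"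
    using tr[of C] by blast
  show "\<exists>C' N0. \<forall>n\<ge>N0. {\<omega> \<in> space M. C' * a n < norm (X n \<omega>)} \<subseteq> (\<Union>j\<in>J. {\<omega> \<in> space M. C j * b j n < norm (Y j n \<omega>)})"
  proof (intro exI allI impI)
    fix n assume n: "n \<ge> N0"
    show "{\<omega> \<in> space M. C' * a n < norm (X n \<omega>)} \<subseteq> (\<Union>j\<in>J. {\<omega> \<in> space M. C j * b j n < norm (Y j n \<omega>)})"
    proof
      fix \<omega> assume w: "\<omega> \<in> {\<omega> \<in> space M. C' * a n < norm (X n \<omega>)}"
      show "\<omega> \<in> (\<Union>j\<in>J. {\<omega> \<in> space M. C j * b j n < norm (Y j n \<omega>)})"
      proof (rule ccontr)
        assume "\<omega> \<notin> (\<Union>j\<in>J. {\<omega> \<in> space M. C j * b j n < norm (Y j n \<omega>)})"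
        then have "\<forall>j\<in>J. norm (Y j n \<omega>) \<le> C j * b j n" using w by (auto simp: not_less)
        then have "norm (X n \<omega>) \<le> C' * a n" using H[OF n] w by blast
        then show False using w by simp
      qed
    qed
  qed
qed

lemma Op_transfer1:
  fixes X :: "nat \<Rightarrow> 'a \<Rightarrow> 'b::real_normed_vector" and Y :: "nat \<Rightarrow> 'a \<Rightarrow> 'c::real_normed_vector"
  assumes Y: "Op M Y b"
    and tr: "\<And>C. \<exists>C' N0. \<forall>n\<ge>N0. \<forall>\<omega>\<in>space M. norm (Y n \<omega>) \<le> C * b n \<longrightarrow> norm (X n \<omega>) \<le> C' * a n"
  shows "Op M X a"
proof (rule Op_family[where J="{()}" and Y="\<lambda>_. Y" and b="\<lambda>_. b"])
  fix C :: "unit \<Rightarrow> real"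
  show "\<exists>C' N0. \<forall>n\<ge>N0. \<forall>\<omega>\<in>space M. (\<forall>j\<in>{()}. norm (Y n \<omega>) \<le> C j * b n) \<longrightarrow> norm (X n \<omega>) \<le> C' * a n"
    using tr[of "C ()"] by simp
qed (use Y in auto)

lemma Op_const: "Op M (\<lambda>n \<omega>. c) (\<lambda>n. 1)"
  unfolding Op_def
proof (intro allI impI)
  fix \<epsilon> :: real assume "\<epsilon> > 0"
  then show "\<exists>C N. \<forall>n\<ge>N. \<exists>A\<in>sets M. {\<omega> \<in> space M. C * 1 < norm c} \<subseteq> A \<and> measure M A < \<epsilon>"
    by (intro exI[of _ "norm c"] exI[of _ 0]) (auto intro!: bexI[of _ "{}"])
qed

lemma Op_sum:
  fixes X :: "'j \<Rightarrow> nat \<Rightarrow> 'a \<Rightarrow> 'b::real_normed_vector"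
  assumes fin: "finite J" and X: "\<forall>j\<in>J. Op M (X j) (\<lambda>n. 1)"
  shows "Op M (\<lambda>n \<omega>. \<Sum>j\<in>J. X j n \<omega>) (\<lambda>n. 1)"
proof (rule Op_family[OF fin X])
  fix C
  show "\<exists>C' N0. \<forall>n\<ge>N0. \<forall>\<omega>\<in>space M. (\<forall>j\<in>J. norm (X j n \<omega>) \<le> C j * 1) \<longrightarrow> norm (\<Sum>j\<in>J. X j n \<omega>) \<le> C' * 1"
  proof (intro exI[of _ "\<Sum>j\<in>J. C j"] exI[of _ 0] allI impI ballI)
    fix n \<omega> assume "\<forall>j\<in>J. norm (X j n \<omega>) \<le> C j * 1"
    then have "norm (\<Sum>j\<in>J. X j n \<omega>) \<le> (\<Sum>j\<in>J. C j)"
      by (intro order_trans[OF norm_sum sum_mono]) auto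
    then show "norm (\<Sum>j\<in>J. X j n \<omega>) \<le> (\<Sum>j\<in>J. C j) * 1" by simp
  qed
qed

lemma Op_add:
  fixes X Y :: "nat \<Rightarrow> 'a \<Rightarrow> 'b::real_normed_vector"
  assumes "Op M X (\<lambda>n. 1)" "Op M Y (\<lambda>n. 1)"
  shows "Op M (\<lambda>n \<omega>. X n \<omega> + Y n \<omega>) (\<lambda>n. 1)"
  using Op_sum[where J="{True, False}" and X="\<lambda>b. if b then X else Y" and M=M] assms by simp

lemma Op_mult:
  fixes X Y :: "nat \<Rightarrow> 'a \<Rightarrow> real"
  assumes X: "Op M X (\<lambda>n. 1)" and Y: "Op M Y (\<lambda>n. 1)"
  shows "Op M (\<lambda>n \<omega>. X n \<omega> * Y n \<omega>) (\<lambda>n. 1)"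
proof (rule Op_family[where J="{True, False}" and Y="\<lambda>b. if b then X else Y" and b="\<lambda>_ _. 1"])
  fix C :: "bool \<Rightarrow> real"
  show "\<exists>C' N0. \<forall>n\<ge>N0. \<forall>\<omega>\<in>space M. (\<forall>j\<in>{True, False}. norm ((if j then X else Y) n \<omega>) \<le> C j * 1) \<longrightarrow>
        norm (X n \<omega> * Y n \<omega>) \<le> C' * 1"
  proof (intro exI[of _ "\<bar>C True\<bar> * \<bar>C False\<bar>"] exI[of _ 0] allI impI ballI)
    fix n \<omega> assume h: "\<forall>j\<in>{True, False}. norm ((if j then X else Y) n \<omega>) \<le> C j * 1"
    have "norm (X n \<omega>) \<le> C True * 1" using bspec[OF h, of True] by simp
    then have x: "\<bar>X n \<omega>\<bar> \<le> \<bar>C True\<bar>" by simp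
    have "norm (Y n \<omega>) \<le> C False * 1" using bspec[OF h, of False] by simp
    then have y: "\<bar>Y n \<omega>\<bar> \<le> \<bar>C False\<bar>" by simp
    show "norm (X n \<omega> * Y n \<omega>) \<le> \<bar>C True\<bar> * \<bar>C False\<bar> * 1"
      unfolding real_norm_def abs_mult mult_1_right by (rule mult_mono[OF x y]) auto
  qed
next
  show "\<forall>j\<in>{True, False}. Op M (if j then X else Y) (\<lambda>_. 1)" using X Y by simp
qed simp

lemma Op_vec:
  fixes X :: "'k::finite \<Rightarrow> nat \<Rightarrow> 'a \<Rightarrow> real"
  assumes X: "\<forall>i. Op M (X i) a"
  shows "Op M (\<lambda>n \<omega>. \<chi> i. X i n \<omega>) a"
proof (rule Op_family[where J=UNIV and Y=X and b="\<lambda>_. a"])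
  fix C :: "'k \<Rightarrow> real"
  show "\<exists>C' N0. \<forall>n\<ge>N0. \<forall>\<omega>\<in>space M. (\<forall>j\<in>UNIV. norm (X j n \<omega>) \<le> C j * a n) \<longrightarrow> norm (\<chi> i. X i n \<omega>) \<le> C' * a n"
  proof (intro exI[of _ "\<Sum>j\<in>UNIV. C j"] exI[of _ 0] allI impI ballI)
    fix n \<omega> assume h: "\<forall>j\<in>UNIV. norm (X j n \<omega>) \<le> C j * a n"
    have "norm (\<chi> i. X i n \<omega>) \<le> (\<Sum>i\<in>UNIV. \<bar>X i n \<omega>\<bar>)" using norm_le_l1_cart[of "\<chi> i. X i n \<omega>"] by simp
    also have "\<dots> \<le> (\<Sum>i\<in>UNIV. C i * a n)" using h by (intro sum_mono) auto
    finally show "norm (\<chi> i. X i n \<omega>) \<le> (\<Sum>j\<in>UNIV. C j) * a n" by (simp add: sum_distrib_right)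
  qed
qed (use X in auto)

lemma norm_le_sum_vec: "norm (x::'b::real_normed_vector^'k) \<le> (\<Sum>i\<in>UNIV. norm (x $ i))"
  by (simp add: norm_vec_def L2_set_le_sum)

lemma Op_mat:
  fixes X :: "'k::finite \<Rightarrow> 'l::finite \<Rightarrow> nat \<Rightarrow> 'a \<Rightarrow> real"
  assumes X: "\<forall>i j. Op M (X i j) a"
  shows "Op M (\<lambda>n \<omega>. \<chi> i j. X i j n \<omega>) a"
proof -
  have "\<forall>i. Op M (\<lambda>n \<omega>. \<chi> j. X i j n \<omega>) a" using X by (auto intro: Op_vec)
  then have "Op M (\<lambda>n \<omega>. \<chi> i. (\<chi> j. X i j n \<omega>)) a"
  proof (intro Op_family[where J=UNIV and Y="\<lambda>i n \<omega>. \<chi> j. X i j n \<omega>" and b="\<lambda>_. a"])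
    fix C :: "'k \<Rightarrow> real"
    show "\<exists>C' N0. \<forall>n\<ge>N0. \<forall>\<omega>\<in>space M. (\<forall>j\<in>UNIV. norm (\<chi> jj. X j jj n \<omega>) \<le> C j * a n) \<longrightarrow> norm (\<chi> i. (\<chi> j. X i j n \<omega>)) \<le> C' * a n"
    proof (intro exI[of _ "\<Sum>j\<in>UNIV. C j"] exI[of _ 0] allI impI ballI)
      fix n \<omega> assume h: "\<forall>j\<in>UNIV. norm (\<chi> jj. X j jj n \<omega>) \<le> C j * a n"
      have "norm (\<chi> i. (\<chi> j. X i j n \<omega>)) \<le> (\<Sum>i\<in>UNIV. norm (\<chi> j. X i j n \<omega>))"
        using norm_le_sum_vec[of "\<chi> i j. X i j n \<omega>"] by simp
      also have "\<dots> \<le> (\<Sum>i\<in>UNIV. C i * a n)" using h by (intro sum_mono) auto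
      finally show "norm (\<chi> i. (\<chi> j. X i j n \<omega>)) \<le> (\<Sum>j\<in>UNIV. C j) * a n" by (simp add: sum_distrib_right)
    qed
  qed auto
  then show ?thesis .
qed

lemma inj_det_nz:
  fixes A :: "real^'k^'k"
  assumes ker: "\<And>x. A *v x = 0 \<Longrightarrow> x = 0"
  shows "det A \<noteq> 0"
proof -
  have "inj ((*v) A)"
  proof (rule injI)
    fix x y assume "A *v x = A *v y"
    then have "A *v (x - y) = 0" by (simp add: matrix_vector_mult_diff_distrib)
    from ker[OF this] show "x = y" by simp
  qed
  then show ?thesis
    using det_nz_iff_inj[of "(*v) A"] by (simp add: matrix_vector_mul_linear matrix_of_matrix_vector_mul)
qed

lemma matrix_inv_left':
  fixes A :: "real^'k^'k"
  assumes "det A \<noteq> 0"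
  shows "matrix_inv A ** A = mat 1" "A ** matrix_inv A = mat 1"
proof -
  have "invertible A" using assms invertible_det_nz by blast
  then have "\<exists>A'. A ** A' = mat 1 \<and> A' ** A = mat 1" by (simp add: invertible_def)
  then have "A ** matrix_inv A = mat 1 \<and> matrix_inv A ** A = mat 1"
    unfolding matrix_inv_def by (rule someI_ex)
  then show "matrix_inv A ** A = mat 1" "A ** matrix_inv A = mat 1" by auto
qed

lemma pd_ker:
  fixes A :: "real^'k^'k"
  assumes pd: "\<And>x. \<mu> * (x \<bullet> x) \<le> x \<bullet> (A *v x)" and mu: "\<mu> > 0"
  shows "A *v x = 0 \<Longrightarrow> x = 0"
proof -
  assume "A *v x = 0"
  then have "\<mu> * (x \<bullet> x) \<le> 0" using pd[of x] by simp
  then have "x \<bullet> x \<le> 0" using mu by (simp add: mult_le_0_iff)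
  then show "x = 0" by (metis antisym inner_eq_zero_iff inner_ge_zero)
qed

lemma pd_inv_bound:
  fixes A :: "real^'k^'k"
  assumes pd: "\<And>x. \<mu> * (x \<bullet> x) \<le> x \<bullet> (A *v x)" and mu: "\<mu> > 0" and y: "A *v y = b"
  shows "norm y \<le> norm b / \<mu>"
proof -
  have "\<mu> * (norm y * norm y) \<le> y \<bullet> b" using pd[of y] y by (simp add: dot_square_norm power2_eq_square)
  also have "\<dots> \<le> norm y * norm b" by (rule Cauchy_Schwarz_ineq2[THEN order_trans[OF abs_ge_self]])
  finally have "\<mu> * (norm y * norm y) \<le> norm y * norm b" .
  then have ny: "norm y * (\<mu> * norm y) \<le> norm y * norm b" by (simp add: algebra_simps)
  have "\<mu> * norm y \<le> norm b" if "norm y > 0" using mult_left_le_imp_le[OF ny that] .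
  then show ?thesis using mu
    by (cases "norm y > 0") (auto simp: field_simps)
qed

lemma det_continuous:
  fixes A :: "real \<Rightarrow> real^'k^'k"
  assumes "\<And>i j. continuous_on S (\<lambda>t. A t $ i $ j)"
  shows "continuous_on S (\<lambda>t. det (A t))"
  unfolding det_def by (intro continuous_intros assms)

lemma pd_det_pos:
  fixes A :: "real^'k^'k"
  assumes pd: "\<And>x. \<mu> * (x \<bullet> x) \<le> x \<bullet> (A *v x)" and mu: "\<mu> > 0"
  shows "det A > 0"
proof (rule ccontr)
  assume "\<not> det A > 0"
  then have d1: "det A \<le> 0" by simp
  define B where "B = (\<lambda>t::real. (1 - t) *\<^sub>R mat 1 + t *\<^sub>R A)"
  have cont: "continuous_on {0..1} (\<lambda>t. det (B t))"
    by (rule det_continuous) (auto simp: B_def intro!: continuous_intros)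
  have "det (B 1) \<le> 0" "0 \<le> det (B 0)" using d1 by (auto simp: B_def)
  then obtain t where t: "0 \<le> t" "t \<le> 1" "det (B t) = 0"
    using IVT2'[of "\<lambda>t. det (B t)" 1 0 0, OF _ _ _ cont] by auto
  have pdB: "min 1 \<mu> * (x \<bullet> x) \<le> x \<bullet> (B t *v x)" for x
  proof -
    have "B t *v x = (1 - t) *\<^sub>R x + t *\<^sub>R (A *v x)"
      by (simp add: B_def matrix_vector_mult_add_rdistrib scaleR_matrix_vector_assoc[symmetric])
    then have e: "x \<bullet> (B t *v x) = (1 - t) * (x \<bullet> x) + t * (x \<bullet> (A *v x))"
      by (simp add: inner_add_right)
    have "min 1 \<mu> * (x \<bullet> x) = (1 - t) * (min 1 \<mu> * (x \<bullet> x)) + t * (min 1 \<mu> * (x \<bullet> x))"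
      by (simp add: algebra_simps)
    also have "\<dots> \<le> (1 - t) * (x \<bullet> x) + t * (x \<bullet> (A *v x))"
    proof (rule add_mono)
      have "min 1 \<mu> * (x \<bullet> x) \<le> 1 * (x \<bullet> x)" by (intro mult_right_mono) auto
      then show "(1 - t) * (min 1 \<mu> * (x \<bullet> x)) \<le> (1 - t) * (x \<bullet> x)"
        using t by (intro mult_left_mono) auto
      have "min 1 \<mu> * (x \<bullet> x) \<le> \<mu> * (x \<bullet> x)" by (intro mult_right_mono) auto
      also have "\<dots> \<le> x \<bullet> (A *v x)" by (rule pd)
      finally show "t * (min 1 \<mu> * (x \<bullet> x)) \<le> t * (x \<bullet> (A *v x))" using t by (intro mult_left_mono) auto
    qed
    finally show ?thesis using e by simp
  qed
  have "det (B t) \<noteq> 0"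
    by (rule inj_det_nz, rule pd_ker[OF pdB]) (use mu in auto)
  then show False using t by simp
qed

lemma det_scaleR_mat:
  fixes A :: "real^'k^'k"
  shows "det (c *\<^sub>R A) = c ^ CARD('k) * det A"
proof -
  have "det (c *\<^sub>R A) = (\<Sum>p\<in>{p. p permutes (UNIV::'k set)}. of_int (sign p) * (c ^ CARD('k) * (\<Prod>i\<in>UNIV. A $ i $ p i)))"
    unfolding det_def by (simp add: prod.distrib)
  also have "\<dots> = c ^ CARD('k) * det A"
    unfolding det_def by (simp add: sum_distrib_left algebra_simps)
  finally show ?thesis .
qed

lemma Op_family_E:
  fixes X :: "nat \<Rightarrow> 'a \<Rightarrow> 'b::real_normed_vector" and Y :: "'j \<Rightarrow> nat \<Rightarrow> 'a \<Rightarrow> 'c::real_normed_vector"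
  assumes fin: "finite J" and Y: "\<forall>j\<in>J. Op M (Y j) (b j)" and E: "small M E"
    and tr: "\<And>C Ce. \<exists>C' N0. \<forall>n\<ge>N0. \<forall>\<omega>\<in>space M. (\<forall>j\<in>J. norm (Y j n \<omega>) \<le> C j * b j n) \<longrightarrow> \<omega> \<notin> E Ce n \<longrightarrow> norm (X n \<omega>) \<le> C' * a n"
  shows "Op M X a"
  unfolding Op_small
proof (rule small_transfer[where J="insert None (Some ` J)"
      and Bd="\<lambda>jo C n. case jo of None \<Rightarrow> E C n | Some j \<Rightarrow> {\<omega> \<in> space M. C * b j n < norm (Y j n \<omega>)}"])
  show "finite (insert None (Some ` J))" using fin by simp
  show "\<forall>j\<in>insert None (Some ` J). small M (\<lambda>C n. case j of None \<Rightarrow> E C n | Some j \<Rightarrow> {\<omega> \<in> space M. C * b j n < norm (Y j n \<omega>)})"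
    using Y E by (auto simp: Op_small)
  fix C :: "'j option \<Rightarrow> real"
  obtain C' N0 where H: "\<And>n \<omega>. n \<ge> N0 \<Longrightarrow> \<omega> \<in> space M \<Longrightarrow> (\<forall>j\<in>J. norm (Y j n \<omega>) \<le> C (Some j) * b j n) \<Longrightarrow> \<omega> \<notin> E (C None) n \<Longrightarrow> norm (X n \<omega>) \<le> C' * a n"
    using tr[of "\<lambda>j. C (Some j)" "C None"] by blast
  show "\<exists>C' N0. \<forall>n\<ge>N0. {\<omega> \<in> space M. C' * a n < norm (X n \<omega>)} \<subseteq>
     (\<Union>j\<in>insert None (Some ` J). case j of None \<Rightarrow> E (C j) n | Some ja \<Rightarrow> {\<omega> \<in> space M. C j * b ja n < norm (Y ja n \<omega>)})"
  proof (intro exI allI impI)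
    fix n assume n: "n \<ge> N0"
    show "{\<omega> \<in> space M. C' * a n < norm (X n \<omega>)} \<subseteq>
     (\<Union>j\<in>insert None (Some ` J). case j of None \<Rightarrow> E (C j) n | Some ja \<Rightarrow> {\<omega> \<in> space M. C j * b ja n < norm (Y ja n \<omega>)})"
    proof
      fix \<omega> assume w: "\<omega> \<in> {\<omega> \<in> space M. C' * a n < norm (X n \<omega>)}"
      show "\<omega> \<in> (\<Union>j\<in>insert None (Some ` J). case j of None \<Rightarrow> E (C j) n | Some ja \<Rightarrow> {\<omega> \<in> space M. C j * b ja n < norm (Y ja n \<omega>)})"
      proof (rule ccontr)
        assume nin: "\<omega> \<notin> (\<Union>j\<in>insert None (Some ` J). case j of None \<Rightarrow> E (C j) n | Some ja \<Rightarrow> {\<omega> \<in> space M. C j * b ja n < norm (Y ja n \<omega>)})"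
        then have "\<omega> \<notin> E (C None) n" by auto
        moreover have "\<forall>j\<in>J. norm (Y j n \<omega>) \<le> C (Some j) * b j n"
        proof
          fix j assume "j \<in> J"
          then have "\<omega> \<notin> {\<omega> \<in> space M. C (Some j) * b j n < norm (Y j n \<omega>)}" using nin by auto
          then show "norm (Y j n \<omega>) \<le> C (Some j) * b j n" using w by (auto simp: not_less)
        qed
        ultimately have "norm (X n \<omega>) \<le> C' * a n" using H[OF n] w by blast
        then show False using w by simp
      qed
    qed
  qed
qed

lemma deriv_local:
  fixes g h :: "real \<Rightarrow> real"
  assumes "open W" "x \<in> W" "\<And>y. y \<in> W \<Longrightarrow> g y = h y" "(h has_real_derivative D) (at x)"
  shows "deriv g x = D"
proof -
  have "(g has_real_derivative D) (at x)"
    by (rule has_field_derivative_transform_within_open[OF assms(4) assms(1) assms(2)]) (use assms(3) in auto)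
  then show ?thesis by (rule DERIV_imp_deriv)
qed

lemma sum_closed:
  assumes c: "\<And>c. (\<lambda>n \<omega> \<psi>. c) \<in> S"
    and a: "\<And>G H. G \<in> S \<Longrightarrow> H \<in> S \<Longrightarrow> (\<lambda>n \<omega> \<psi>. G n \<omega> \<psi> + H n \<omega> \<psi>) \<in> S"
    and fin: "finite A" and F: "\<And>x. x \<in> A \<Longrightarrow> F x \<in> S"
  shows "(\<lambda>n \<omega> \<psi>. \<Sum>x\<in>A. F x n \<omega> \<psi>) \<in> S"
  using fin F
proof (induction A rule: finite_induct)
  case empty then show ?case using c[of 0] by simp
next
  case (insert x A)
  have "(\<lambda>n \<omega> \<psi>. F x n \<omega> \<psi> + (\<Sum>x\<in>A. F x n \<omega> \<psi>)) \<in> S"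
    using insert by (intro a) auto
  then show ?case using insert.hyps by simp
qed

lemma prod_closed:
  assumes c: "\<And>c. (\<lambda>n \<omega> \<psi>. c) \<in> S"
    and m: "\<And>G H. G \<in> S \<Longrightarrow> H \<in> S \<Longrightarrow> (\<lambda>n \<omega> \<psi>. G n \<omega> \<psi> * H n \<omega> \<psi>) \<in> S"
    and fin: "finite A" and F: "\<And>x. x \<in> A \<Longrightarrow> F x \<in> S"
  shows "(\<lambda>n \<omega> \<psi>. \<Prod>x\<in>A. F x n \<omega> \<psi>) \<in> S"
  using fin F
proof (induction A rule: finite_induct)
  case empty then show ?case using c[of 1] by simp
next
  case (insert x A)
  have "(\<lambda>n \<omega> \<psi>. F x n \<omega> \<psi> * (\<Prod>x\<in>A. F x n \<omega> \<psi>)) \<in> S"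
    using insert by (intro m) auto
  then show ?case using insert.hyps by simp
qed

lemma det_closed:
  fixes E :: "'k::finite \<Rightarrow> 'k \<Rightarrow> nat \<Rightarrow> 'a \<Rightarrow> real \<Rightarrow> real"
  assumes c: "\<And>c. (\<lambda>n \<omega> \<psi>. c) \<in> S"
    and a: "\<And>G H. G \<in> S \<Longrightarrow> H \<in> S \<Longrightarrow> (\<lambda>n \<omega> \<psi>. G n \<omega> \<psi> + H n \<omega> \<psi>) \<in> S"
    and m: "\<And>G H. G \<in> S \<Longrightarrow> H \<in> S \<Longrightarrow> (\<lambda>n \<omega> \<psi>. G n \<omega> \<psi> * H n \<omega> \<psi>) \<in> S"
    and E: "\<And>i j. E i j \<in> S"
  shows "(\<lambda>n \<omega> \<psi>. det (\<chi> i j. E i j n \<omega> \<psi>)) \<in> S"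
proof -
  have "(\<lambda>n \<omega> \<psi>. \<Sum>p\<in>{p. p permutes (UNIV::'k set)}. (\<lambda>n \<omega> \<psi>. of_int (sign p) * (\<Prod>i\<in>UNIV. E i (p i) n \<omega> \<psi>)) n \<omega> \<psi>) \<in> S"
  proof (rule sum_closed[OF c a])
    show "finite {p. p permutes (UNIV::'k set)}" by (rule finite_permutations) simp
    fix p :: "'k \<Rightarrow> 'k"
    have "(\<lambda>n \<omega> \<psi>. \<Prod>i\<in>UNIV. E i (p i) n \<omega> \<psi>) \<in> S" by (rule prod_closed[OF c m]) (auto intro: E)
    then show "(\<lambda>n \<omega> \<psi>. of_int (sign p) * (\<Prod>i\<in>UNIV. E i (p i) n \<omega> \<psi>)) \<in> S"
      using m[OF c] by blast
  qed
  then show ?thesis unfolding det_def by simp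
qed

locale LS =
  fixes M :: "'a measure"
    and l :: "nat \<Rightarrow> 'a \<Rightarrow> real \<times> (real^'m) \<Rightarrow> real"
    and psihat :: "nat \<Rightarrow> 'a \<Rightarrow> real"
    and lamhat :: "nat \<Rightarrow> 'a \<Rightarrow> real \<Rightarrow> real^'m"
  assumes smooth: "\<forall>n. \<forall>\<omega>\<in>space M. smooth_fun (l n \<omega>)"
    and prof_max: "\<forall>n. \<forall>\<omega>\<in>space M. \<forall>psi lam. l n \<omega> (psi, lam) \<le> l n \<omega> (psi, lamhat n \<omega> psi)"
    and mle: "\<forall>n. \<forall>\<omega>\<in>space M. \<forall>th. l n \<omega> th \<le> l n \<omega> (psihat n \<omega>, lamhat n \<omega> (psihat n \<omega>))"
    and prof_smooth: "\<forall>n. \<forall>\<omega>\<in>space M. \<exists>U. open U \<and> psihat n \<omega> \<in> U \<and>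
        (\<forall>i k. \<forall>psi\<in>U. (deriv ^^ k) (\<lambda>t. lamhat n \<omega> t $ i) differentiable (at psi))"
begin

definition P :: "'m option list \<Rightarrow> nat \<Rightarrow> 'a \<Rightarrow> real \<Rightarrow> real" where
  "P js n \<omega> \<psi> = pds (l n \<omega>) js (\<psi>, lamhat n \<omega> \<psi>) / real n"

definition Imat :: "nat \<Rightarrow> 'a \<Rightarrow> real \<Rightarrow> real^'m^'m" where
  "Imat n \<omega> \<psi> = (\<chi> i k. - P [Some i, Some k] n \<omega> \<psi>)"

definition dI :: "nat \<Rightarrow> 'a \<Rightarrow> real \<Rightarrow> real" where
  "dI n \<omega> \<psi> = det (Imat n \<omega> \<psi>)"

definition Qf :: "nat \<Rightarrow> 'a \<Rightarrow> real \<Rightarrow> real" where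
  "Qf n \<omega> \<psi> = 1 / dI n \<omega> \<psi>"

definition U :: "nat \<Rightarrow> 'a \<Rightarrow> real set" where
  "U n \<omega> = (SOME U. open U \<and> psihat n \<omega> \<in> U \<and>
        (\<forall>i k. \<forall>psi\<in>U. (deriv ^^ k) (\<lambda>t. lamhat n \<omega> t $ i) differentiable (at psi)))"

definition W :: "nat \<Rightarrow> 'a \<Rightarrow> real set" where
  "W n \<omega> = U n \<omega> \<inter> {\<psi>. dI n \<omega> \<psi> > 0}"

definition dlam :: "'m \<Rightarrow> nat \<Rightarrow> 'a \<Rightarrow> real \<Rightarrow> real" where
  "dlam i n \<omega> \<psi> = deriv (\<lambda>t. lamhat n \<omega> t $ i) \<psi>"

definition Lam :: "'m \<Rightarrow> nat \<Rightarrow> 'a \<Rightarrow> real \<Rightarrow> real" where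
  "Lam i n \<omega> \<psi> = det (\<chi> a b. if b = i then P [None, Some a] n \<omega> \<psi> else Imat n \<omega> \<psi> $ b $ a) * Qf n \<omega> \<psi>"

lemma sm: "\<omega> \<in> space M \<Longrightarrow> smooth_fun (l n \<omega>)"
  using smooth by blast

lemma U_props:
  assumes "\<omega> \<in> space M"
  shows "open (U n \<omega>)" "psihat n \<omega> \<in> U n \<omega>"
    "\<And>i k psi. psi \<in> U n \<omega> \<Longrightarrow> (deriv ^^ k) (\<lambda>t. lamhat n \<omega> t $ i) differentiable (at psi)"
proof -
  have "\<exists>U. open U \<and> psihat n \<omega> \<in> U \<and>
        (\<forall>i k. \<forall>psi\<in>U. (deriv ^^ k) (\<lambda>t. lamhat n \<omega> t $ i) differentiable (at psi))"
    using prof_smooth assms by blast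
  then have "open (U n \<omega>) \<and> psihat n \<omega> \<in> U n \<omega> \<and>
        (\<forall>i k. \<forall>psi\<in>U n \<omega>. (deriv ^^ k) (\<lambda>t. lamhat n \<omega> t $ i) differentiable (at psi))"
    unfolding U_def by (rule someI_ex)
  then show "open (U n \<omega>)" "psihat n \<omega> \<in> U n \<omega>"
    "\<And>i k psi. psi \<in> U n \<omega> \<Longrightarrow> (deriv ^^ k) (\<lambda>t. lamhat n \<omega> t $ i) differentiable (at psi)"
    by auto
qed

lemma lam_deriv:
  assumes "\<omega> \<in> space M" "\<psi> \<in> U n \<omega>"
  shows "((\<lambda>t. lamhat n \<omega> t $ i) has_real_derivative dlam i n \<omega> \<psi>) (at \<psi>)"
proof -
  have "(deriv ^^ 0) (\<lambda>t. lamhat n \<omega> t $ i) differentiable (at \<psi>)" using U_props(3)[OF assms] .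
  then show ?thesis by (simp add: dlam_def DERIV_deriv_iff_real_differentiable)
qed

lemma P_deriv:
  assumes "\<omega> \<in> space M" "\<psi> \<in> U n \<omega>"
  shows "(P js n \<omega> has_real_derivative
    (P (None # js) n \<omega> \<psi> + (\<Sum>i\<in>UNIV. P (Some i # js) n \<omega> \<psi> * dlam i n \<omega> \<psi>))) (at \<psi>)"
proof -
  have "((\<lambda>t. pds (l n \<omega>) js (t, lamhat n \<omega> t)) has_real_derivative
     (pd (pds (l n \<omega>) js) None (\<psi>, lamhat n \<omega> \<psi>) + (\<Sum>i\<in>UNIV. pd (pds (l n \<omega>) js) (Some i) (\<psi>, lamhat n \<omega> \<psi>) * (\<chi> i. dlam i n \<omega> \<psi>) $ i))) (at \<psi>)"
    by (rule chain_rule[OF smooth_pds[OF sm[OF assms(1)]]]) (simp add: lam_deriv[OF assms])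
  then have "((\<lambda>t. pds (l n \<omega>) js (t, lamhat n \<omega> t) / real n) has_real_derivative
     (pds (l n \<omega>) (None # js) (\<psi>, lamhat n \<omega> \<psi>) + (\<Sum>i\<in>UNIV. pds (l n \<omega>) (Some i # js) (\<psi>, lamhat n \<omega> \<psi>) * dlam i n \<omega> \<psi>)) / real n) (at \<psi>)"
    by (intro DERIV_cdivide) simp
  then show ?thesis
    by (simp add: P_def[abs_def] add_divide_distrib sum_divide_distrib)
qed

lemma stationary:
  assumes "\<omega> \<in> space M"
  shows "pds (l n \<omega>) [Some i] (t, lamhat n \<omega> t) = 0"
proof -
  have "pd (l n \<omega>) (Some i) (t, lamhat n \<omega> t) = 0"
  proof (rule pd_zero_at_max[OF sm[OF assms]])
    fix s
    have "fst (upd (t, lamhat n \<omega> t) (Some i) s) = t"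
      by (simp add: upd_def)
    then have "upd (t, lamhat n \<omega> t) (Some i) s = (t, snd (upd (t, lamhat n \<omega> t) (Some i) s))"
      by (metis prod.collapse)
    then show "l n \<omega> (upd (t, lamhat n \<omega> t) (Some i) s) \<le> l n \<omega> (t, lamhat n \<omega> t)"
      using prof_max assms by metis
  qed
  then show ?thesis by simp
qed

lemma lam_eq:
  assumes "\<omega> \<in> space M" "\<psi> \<in> U n \<omega>"
  shows "(\<Sum>k\<in>UNIV. Imat n \<omega> \<psi> $ k $ a * dlam k n \<omega> \<psi>) = P [None, Some a] n \<omega> \<psi>"
proof -
  have d: "(P [Some a] n \<omega> has_real_derivative
    (P [None, Some a] n \<omega> \<psi> + (\<Sum>i\<in>UNIV. P [Some i, Some a] n \<omega> \<psi> * dlam i n \<omega> \<psi>))) (at \<psi>)"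
    using P_deriv[OF assms, of "[Some a]"] by simp
  have z: "P [Some a] n \<omega> = (\<lambda>t. 0)"
    by (rule ext) (simp add: P_def stationary[OF assms(1), simplified])
  have "P [None, Some a] n \<omega> \<psi> + (\<Sum>i\<in>UNIV. P [Some i, Some a] n \<omega> \<psi> * dlam i n \<omega> \<psi>) = 0"
    using d unfolding z by (rule DERIV_unique) (rule DERIV_const)
  then show ?thesis by (simp add: Imat_def sum_negf)
qed

lemma dlam_Lam:
  assumes "\<omega> \<in> space M" "\<psi> \<in> U n \<omega>" "dI n \<omega> \<psi> \<noteq> 0"
  shows "dlam i n \<omega> \<psi> = Lam i n \<omega> \<psi>"
proof -
  let ?A = "transpose (Imat n \<omega> \<psi>)"
  let ?d = "\<chi> k. dlam k n \<omega> \<psi>"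
  let ?p = "\<chi> a. P [None, Some a] n \<omega> \<psi>"
  have "?A *v ?d = ?p"
    using lam_eq[OF assms(1,2)] by (simp add: vec_eq_iff matrix_vector_mult_def Finite_Cartesian_Product.transpose_def)
  moreover have "det ?A \<noteq> 0" using assms(3) by (simp add: dI_def)
  ultimately have "?d = (\<chi> k. det (\<chi> i j. if j = k then ?p $ i else ?A $ i $ j) / det ?A)"
    using cramer by blast
  then have "dlam i n \<omega> \<psi> = det (\<chi> a b. if b = i then ?p $ a else ?A $ a $ b) / det ?A"
    by (simp add: vec_eq_iff)
  also have "(\<chi> a b. if b = i then ?p $ a else ?A $ a $ b) = (\<chi> a b. if b = i then P [None, Some a] n \<omega> \<psi> else Imat n \<omega> \<psi> $ b $ a)"
    by (simp add: vec_eq_iff Finite_Cartesian_Product.transpose_def)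
  finally have "dlam i n \<omega> \<psi> = det (\<chi> a b. if b = i then P [None, Some a] n \<omega> \<psi> else Imat n \<omega> \<psi> $ b $ a) / dI n \<omega> \<psi>"
    by (simp add: dI_def)
  then show ?thesis by (simp add: Lam_def Qf_def)
qed

end

context LS begin

inductive_set Alg0 :: "(nat \<Rightarrow> 'a \<Rightarrow> real \<Rightarrow> real) set" where
  a0_gen: "2 \<le> length js \<Longrightarrow> P js \<in> Alg0"
| a0_const: "(\<lambda>n \<omega> \<psi>. c) \<in> Alg0"
| a0_add: "G \<in> Alg0 \<Longrightarrow> H \<in> Alg0 \<Longrightarrow> (\<lambda>n \<omega> \<psi>. G n \<omega> \<psi> + H n \<omega> \<psi>) \<in> Alg0"
| a0_mult: "G \<in> Alg0 \<Longrightarrow> H \<in> Alg0 \<Longrightarrow> (\<lambda>n \<omega> \<psi>. G n \<omega> \<psi> * H n \<omega> \<psi>) \<in> Alg0"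

inductive_set Alg :: "(nat \<Rightarrow> 'a \<Rightarrow> real \<Rightarrow> real) set" where
  a_gen: "2 \<le> length js \<Longrightarrow> P js \<in> Alg"
| a_Q: "Qf \<in> Alg"
| a_const: "(\<lambda>n \<omega> \<psi>. c) \<in> Alg"
| a_add: "G \<in> Alg \<Longrightarrow> H \<in> Alg \<Longrightarrow> (\<lambda>n \<omega> \<psi>. G n \<omega> \<psi> + H n \<omega> \<psi>) \<in> Alg"
| a_mult: "G \<in> Alg \<Longrightarrow> H \<in> Alg \<Longrightarrow> (\<lambda>n \<omega> \<psi>. G n \<omega> \<psi> * H n \<omega> \<psi>) \<in> Alg"

lemma Alg0_Alg: "G \<in> Alg0 \<Longrightarrow> G \<in> Alg"
  by (induction rule: Alg0.induct) (auto intro: Alg.intros)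

lemma negP_Alg0: "2 \<le> length js \<Longrightarrow> (\<lambda>n \<omega> \<psi>. - P js n \<omega> \<psi>) \<in> Alg0"
  using a0_mult[OF a0_const[of "-1"] a0_gen[of js]] by simp

lemma dI_Alg0: "dI \<in> Alg0"
proof -
  have "(\<lambda>n \<omega> \<psi>. det (\<chi> i j. (\<lambda>i j n \<omega> \<psi>. - P [Some i, Some j] n \<omega> \<psi>) i j n \<omega> \<psi>)) \<in> Alg0"
    by (rule det_closed) (auto intro: Alg0.intros negP_Alg0)
  then show ?thesis by (simp add: dI_def[abs_def] Imat_def)
qed

lemma Lam_Alg: "Lam i \<in> Alg"
proof -
  let ?E = "\<lambda>a b. if b = i then P [None, Some a] else (\<lambda>n \<omega> \<psi>. - P [Some b, Some a] n \<omega> \<psi>)"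
  have "(\<lambda>n \<omega> \<psi>. det (\<chi> a b. ?E a b n \<omega> \<psi>)) \<in> Alg0"
    by (rule det_closed) (auto intro: Alg0.intros negP_Alg0)
  then have "(\<lambda>n \<omega> \<psi>. det (\<chi> a b. ?E a b n \<omega> \<psi>) * Qf n \<omega> \<psi>) \<in> Alg"
    by (intro a_mult a_Q Alg0_Alg)
  moreover have "(\<lambda>n \<omega> \<psi>. det (\<chi> a b. ?E a b n \<omega> \<psi>) * Qf n \<omega> \<psi>) = Lam i"
  proof (intro ext)
    fix n \<omega> \<psi>
    have "(\<chi> a b. ?E a b n \<omega> \<psi>) = (\<chi> a b. if b = i then P [None, Some a] n \<omega> \<psi> else Imat n \<omega> \<psi> $ b $ a)"
      by (simp add: vec_eq_iff Imat_def)
    then show "det (\<chi> a b. ?E a b n \<omega> \<psi>) * Qf n \<omega> \<psi> = Lam i n \<omega> \<psi>" by (simp add: Lam_def)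
  qed
  ultimately show ?thesis by simp
qed

lemma Alg0_cont: "G \<in> Alg0 \<Longrightarrow> \<omega> \<in> space M \<Longrightarrow> \<psi> \<in> U n \<omega> \<Longrightarrow> isCont (G n \<omega>) \<psi>"
proof (induction rule: Alg0.induct)
  case (a0_gen js) then show ?case using P_deriv DERIV_isCont by blast
qed auto

lemma W_open: "\<omega> \<in> space M \<Longrightarrow> open (W n \<omega>)"
proof -
  assume w: "\<omega> \<in> space M"
  have "continuous_on (U n \<omega>) (dI n \<omega>)"
    using Alg0_cont[OF dI_Alg0 w] by (intro continuous_at_imp_continuous_on) auto
  then have "open (dI n \<omega> -` {0<..} \<inter> U n \<omega>)"
    using continuous_on_open_vimage[OF U_props(1)[OF w], where f="dI n \<omega>"] open_greaterThan by blast
  moreover have "dI n \<omega> -` {0<..} \<inter> U n \<omega> = W n \<omega>" by (auto simp: W_def)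
  ultimately show ?thesis by simp
qed

lemma W_U: "\<psi> \<in> W n \<omega> \<Longrightarrow> \<psi> \<in> U n \<omega>" and W_dI: "\<psi> \<in> W n \<omega> \<Longrightarrow> dI n \<omega> \<psi> > 0"
  by (auto simp: W_def)

definition hasD :: "(nat \<Rightarrow> 'a \<Rightarrow> real \<Rightarrow> real) \<Rightarrow> (nat \<Rightarrow> 'a \<Rightarrow> real \<Rightarrow> real) \<Rightarrow> bool" where
  "hasD G H \<longleftrightarrow> (\<forall>n \<omega> \<psi>. \<omega> \<in> space M \<longrightarrow> \<psi> \<in> W n \<omega> \<longrightarrow> (G n \<omega> has_real_derivative H n \<omega> \<psi>) (at \<psi>))"

lemma P_hasD: "hasD (P js) (\<lambda>n \<omega> \<psi>. P (None # js) n \<omega> \<psi> + (\<Sum>i\<in>UNIV. P (Some i # js) n \<omega> \<psi> * Lam i n \<omega> \<psi>))"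
  unfolding hasD_def
proof (intro allI impI)
  fix n \<omega> \<psi> assume w: "\<omega> \<in> space M" and p: "\<psi> \<in> W n \<omega>"
  have "dlam i n \<omega> \<psi> = Lam i n \<omega> \<psi>" for i
    using dlam_Lam[OF w W_U[OF p]] W_dI[OF p] by simp
  then show "(P js n \<omega> has_real_derivative P (None # js) n \<omega> \<psi> + (\<Sum>i\<in>UNIV. P (Some i # js) n \<omega> \<psi> * Lam i n \<omega> \<psi>)) (at \<psi>)"
    using P_deriv[OF w W_U[OF p], of js] by simp
qed

lemma Alg_sum: "finite A \<Longrightarrow> (\<And>x. x \<in> A \<Longrightarrow> F x \<in> Alg) \<Longrightarrow> (\<lambda>n \<omega> \<psi>. \<Sum>x\<in>A. F x n \<omega> \<psi>) \<in> Alg"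
  by (rule sum_closed) (auto intro: Alg.intros)

lemma Alg0_deriv: "G \<in> Alg0 \<Longrightarrow> \<exists>H\<in>Alg. hasD G H"
proof (induction rule: Alg0.induct)
  case (a0_gen js)
  have "(\<lambda>n \<omega> \<psi>. P (None # js) n \<omega> \<psi> + (\<Sum>i\<in>UNIV. P (Some i # js) n \<omega> \<psi> * Lam i n \<omega> \<psi>)) \<in> Alg"
    using a0_gen by (intro a_add a_gen Alg_sum a_mult Lam_Alg) auto
  then show ?case using P_hasD by blast
next
  case (a0_const c)
  have "hasD (\<lambda>n \<omega> \<psi>. c) (\<lambda>n \<omega> \<psi>. 0)" by (simp add: hasD_def)
  then show ?case using a_const by blast
next
  case (a0_add G H)
  then obtain G' H' where "G' \<in> Alg" "hasD G G'" "H' \<in> Alg" "hasD H H'" by blast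
  then have "hasD (\<lambda>n \<omega> \<psi>. G n \<omega> \<psi> + H n \<omega> \<psi>) (\<lambda>n \<omega> \<psi>. G' n \<omega> \<psi> + H' n \<omega> \<psi>)"
    "(\<lambda>n \<omega> \<psi>. G' n \<omega> \<psi> + H' n \<omega> \<psi>) \<in> Alg"
    by (auto simp: hasD_def intro!: DERIV_add a_add)
  then show ?case by blast
next
  case (a0_mult G H)
  then obtain G' H' where "G' \<in> Alg" "hasD G G'" "H' \<in> Alg" "hasD H H'" "G \<in> Alg" "H \<in> Alg"
    using Alg0_Alg by blast
  then have "hasD (\<lambda>n \<omega> \<psi>. G n \<omega> \<psi> * H n \<omega> \<psi>) (\<lambda>n \<omega> \<psi>. G' n \<omega> \<psi> * H n \<omega> \<psi> + H' n \<omega> \<psi> * G n \<omega> \<psi>)"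
    "(\<lambda>n \<omega> \<psi>. G' n \<omega> \<psi> * H n \<omega> \<psi> + H' n \<omega> \<psi> * G n \<omega> \<psi>) \<in> Alg"
    by (auto simp: hasD_def intro!: DERIV_mult a_add a_mult)
  then show ?case by blast
qed

lemma Alg_deriv: "G \<in> Alg \<Longrightarrow> \<exists>H\<in>Alg. hasD G H"
proof (induction rule: Alg.induct)
  case (a_gen js)
  then show ?case using Alg0_deriv[OF a0_gen[OF a_gen]] by blast
next
  case a_Q
  obtain Hd where Hd: "Hd \<in> Alg" "hasD dI Hd" using Alg0_deriv[OF dI_Alg0] by blast
  have "hasD Qf (\<lambda>n \<omega> \<psi>. (- 1) * Hd n \<omega> \<psi> * Qf n \<omega> \<psi> * Qf n \<omega> \<psi>)"
    unfolding hasD_def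
  proof (intro allI impI)
    fix n \<omega> \<psi> assume w: "\<omega> \<in> space M" and p: "\<psi> \<in> W n \<omega>"
    have d: "(dI n \<omega> has_real_derivative Hd n \<omega> \<psi>) (at \<psi>)" using Hd(2) w p by (simp add: hasD_def)
    have nz: "dI n \<omega> \<psi> \<noteq> 0" using W_dI[OF p] by simp
    have "((\<lambda>t. inverse (dI n \<omega> t)) has_real_derivative - (Hd n \<omega> \<psi> * inverse (dI n \<omega> \<psi> ^ Suc (Suc 0)))) (at \<psi>)"
      by (rule DERIV_inverse_fun[OF d nz])
    moreover have "(\<lambda>t. inverse (dI n \<omega> t)) = Qf n \<omega>" by (rule ext) (simp add: Qf_def inverse_eq_divide)
    ultimately have d2: "(Qf n \<omega> has_real_derivative - (Hd n \<omega> \<psi> * inverse (dI n \<omega> \<psi> ^ Suc (Suc 0)))) (at \<psi>)"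
      by simp
    have e: "- (Hd n \<omega> \<psi> * inverse (dI n \<omega> \<psi> ^ Suc (Suc 0))) = (- 1) * Hd n \<omega> \<psi> * Qf n \<omega> \<psi> * Qf n \<omega> \<psi>"
      using nz by (simp add: Qf_def field_simps)
    show "(Qf n \<omega> has_real_derivative (- 1) * Hd n \<omega> \<psi> * Qf n \<omega> \<psi> * Qf n \<omega> \<psi>) (at \<psi>)"
      using d2 unfolding e .
  qed
  moreover have "(\<lambda>n \<omega> \<psi>. (- 1) * Hd n \<omega> \<psi> * Qf n \<omega> \<psi> * Qf n \<omega> \<psi>) \<in> Alg"
    using Hd(1) by (intro Alg.a_mult Alg.a_const Alg.a_Q)
  ultimately show ?case by blast
next
  case (a_const c)
  have "hasD (\<lambda>n \<omega> \<psi>. c) (\<lambda>n \<omega> \<psi>. 0)" by (simp add: hasD_def)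
  then show ?case using Alg.a_const by blast
next
  case (a_add G H)
  then obtain G' H' where "G' \<in> Alg" "hasD G G'" "H' \<in> Alg" "hasD H H'" by blast
  then have "hasD (\<lambda>n \<omega> \<psi>. G n \<omega> \<psi> + H n \<omega> \<psi>) (\<lambda>n \<omega> \<psi>. G' n \<omega> \<psi> + H' n \<omega> \<psi>)"
    "(\<lambda>n \<omega> \<psi>. G' n \<omega> \<psi> + H' n \<omega> \<psi>) \<in> Alg"
    by (auto simp: hasD_def intro!: DERIV_add Alg.a_add)
  then show ?case by blast
next
  case (a_mult G H)
  then obtain G' H' where "G' \<in> Alg" "hasD G G'" "H' \<in> Alg" "hasD H H'" by blast
  then have "hasD (\<lambda>n \<omega> \<psi>. G n \<omega> \<psi> * H n \<omega> \<psi>) (\<lambda>n \<omega> \<psi>. G' n \<omega> \<psi> * H n \<omega> \<psi> + H' n \<omega> \<psi> * G n \<omega> \<psi>)"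
    "(\<lambda>n \<omega> \<psi>. G' n \<omega> \<psi> * H n \<omega> \<psi> + H' n \<omega> \<psi> * G n \<omega> \<psi>) \<in> Alg"
    using a_mult.hyps by (auto simp: hasD_def intro!: DERIV_mult Alg.a_add Alg.a_mult)
  then show ?case by blast
qed

lemma iter:
  assumes "G \<in> Alg" and "\<And>n \<omega> \<psi>. 1 \<le> n \<Longrightarrow> \<omega> \<in> space M \<Longrightarrow> \<psi> \<in> W n \<omega> \<Longrightarrow> g n \<omega> \<psi> = s n * G n \<omega> \<psi>"
  shows "\<exists>H\<in>Alg. \<forall>n \<omega> \<psi>. 1 \<le> n \<longrightarrow> \<omega> \<in> space M \<longrightarrow> \<psi> \<in> W n \<omega> \<longrightarrow> (deriv ^^ k) (g n \<omega>) \<psi> = s n * H n \<omega> \<psi>"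
  using assms
proof (induction k arbitrary: g G)
  case 0 then show ?case by auto
next
  case (Suc k)
  obtain H1 where H1: "H1 \<in> Alg" "hasD G H1" using Alg_deriv[OF Suc.prems(1)] by blast
  have "deriv (g n \<omega>) \<psi> = s n * H1 n \<omega> \<psi>" if n1: "1 \<le> n" and w: "\<omega> \<in> space M" and p: "\<psi> \<in> W n \<omega>" for n \<omega> \<psi>
  proof (rule deriv_local[OF W_open[OF w] p])
    show "\<And>y. y \<in> W n \<omega> \<Longrightarrow> g n \<omega> y = s n * G n \<omega> y" using Suc.prems(2) w n1 by blast
    show "((\<lambda>y. s n * G n \<omega> y) has_real_derivative s n * H1 n \<omega> \<psi>) (at \<psi>)"
      using H1(2) w p unfolding hasD_def by (intro DERIV_cmult) blast
  qed
  then obtain H where H: "H \<in> Alg" "\<forall>n \<omega> \<psi>. 1 \<le> n \<longrightarrow> \<omega> \<in> space M \<longrightarrow> \<psi> \<in> W n \<omega> \<longrightarrow> (deriv ^^ k) (\<lambda>t. deriv (g n \<omega>) t) \<psi> = s n * H n \<omega> \<psi>"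
    using Suc.IH[of H1 "\<lambda>n \<omega>. deriv (g n \<omega>)"] H1(1) by blast
  have "(deriv ^^ Suc k) (g n \<omega>) = (deriv ^^ k) (\<lambda>t. deriv (g n \<omega>) t)" for n \<omega>
    by (simp only: funpow_Suc_right comp_def)
  then show ?case using H by metis
qed

end

locale LS2 = LS M l psihat lamhat
  for M :: "'a measure"
    and l :: "nat \<Rightarrow> 'a \<Rightarrow> real \<times> (real^'m) \<Rightarrow> real"
    and psihat :: "nat \<Rightarrow> 'a \<Rightarrow> real"
    and lamhat :: "nat \<Rightarrow> 'a \<Rightarrow> real \<Rightarrow> real^'m" +
  fixes psi0 :: real
  assumes A1: "\<forall>js. length js > 1 \<longrightarrow>
        Op M (\<lambda>n \<omega>. pds (l n \<omega>) js (psihat n \<omega>, lamhat n \<omega> (psihat n \<omega>))) (\<lambda>n. real n)"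
    and A3pos: "\<forall>n\<ge>1. \<forall>\<omega>\<in>space M. \<forall>e.
        (mat_eigenvalue ((1 / real n) *\<^sub>R obs_info (l n \<omega>) (psihat n \<omega>, lamhat n \<omega> (psihat n \<omega>))) e
         \<or> mat_eigenvalue ((1 / real n) *\<^sub>R obs_info (l n \<omega>) (psi0, lamhat n \<omega> psi0)) e
         \<or> mat_eigenvalue (real n *\<^sub>R matrix_inv (obs_info (l n \<omega>) (psihat n \<omega>, lamhat n \<omega> (psihat n \<omega>)))) e
         \<or> mat_eigenvalue (real n *\<^sub>R matrix_inv (obs_info (l n \<omega>) (psi0, lamhat n \<omega> psi0))) e)
        \<longrightarrow> e > 0"
    and A3c: "Op_eig M (\<lambda>n \<omega>. real n *\<^sub>R matrix_inv (obs_info (l n \<omega>) (psihat n \<omega>, lamhat n \<omega> (psihat n \<omega>)))) (\<lambda>n. 1)"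
begin

abbreviation "th n \<omega> \<equiv> (psihat n \<omega>, lamhat n \<omega> (psihat n \<omega>))"

definition S :: "nat \<Rightarrow> 'a \<Rightarrow> real^('m option)^('m option)" where
  "S n \<omega> = (1 / real n) *\<^sub>R obs_info (l n \<omega>) (th n \<omega>)"

lemma S_entry: "S n \<omega> $ a $ b = - P [a, b] n \<omega> (psihat n \<omega>)"
  by (simp add: S_def obs_info_def P_def)

lemma S_sym:
  assumes w: "\<omega> \<in> space M"
  shows "transpose (S n \<omega>) = S n \<omega>"
proof -
  have "P [a, b] n \<omega> (psihat n \<omega>) = P [b, a] n \<omega> (psihat n \<omega>)" for a b
    unfolding P_def using schwarz[OF sm[OF w], where a=a and b=b and th="th n \<omega>"] by (simp only:)
  then show ?thesis
    by (simp add: vec_eq_iff Finite_Cartesian_Product.transpose_def S_entry)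
qed

lemma Imat_S: "Imat n \<omega> (psihat n \<omega>) $ i $ k = S n \<omega> $ Some i $ Some k"
  by (simp add: Imat_def S_entry)

lemma mu_exists:
  assumes n: "1 \<le> n" and w: "\<omega> \<in> space M"
  obtains \<mu> v0 where "\<mu> > 0" "v0 \<noteq> 0" "S n \<omega> *v v0 = \<mu> *\<^sub>R v0" "\<And>v. \<mu> * (v \<bullet> v) \<le> v \<bullet> (S n \<omega> *v v)"
proof -
  obtain \<mu> v0 where v0: "v0 \<noteq> 0" "S n \<omega> *v v0 = \<mu> *\<^sub>R v0" and all: "\<forall>v. \<mu> * (v \<bullet> v) \<le> v \<bullet> (S n \<omega> *v v)"
    using rayleigh[OF S_sym[OF w]] by blast
  have "mat_eigenvalue (S n \<omega>) \<mu>" using v0 by (auto simp: mat_eigenvalue_def)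
  then have "\<mu> > 0" using A3pos n w by (simp add: S_def)
  then show ?thesis using that v0 all by blast
qed

definition ex :: "real^'m \<Rightarrow> real^('m option)" where
  "ex x = (\<chi> a. case a of None \<Rightarrow> 0 | Some i \<Rightarrow> x $ i)"

lemma ex_inner: "ex x \<bullet> ex x = x \<bullet> x"
  by (simp add: ex_def inner_vec_def sum_option)

lemma ex_quad: "ex x \<bullet> (S n \<omega> *v ex x) = x \<bullet> (Imat n \<omega> (psihat n \<omega>) *v x)"
  by (simp add: ex_def inner_vec_def sum_option matrix_vector_mult_def Imat_S)

lemma Imat_pd:
  assumes "\<And>v. \<mu> * (v \<bullet> v) \<le> v \<bullet> (S n \<omega> *v v)"
  shows "\<mu> * (x \<bullet> x) \<le> x \<bullet> (Imat n \<omega> (psihat n \<omega>) *v x)"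
  using assms[of "ex x"] by (simp add: ex_inner ex_quad)

lemma psihat_W:
  assumes n: "1 \<le> n" and w: "\<omega> \<in> space M"
  shows "psihat n \<omega> \<in> W n \<omega>"
proof -
  obtain \<mu> v0 where mu: "\<mu> > 0" and pd: "\<And>v. \<mu> * (v \<bullet> v) \<le> v \<bullet> (S n \<omega> *v v)"
    using mu_exists[OF n w] by blast
  have "dI n \<omega> (psihat n \<omega>) > 0"
    unfolding dI_def by (rule pd_det_pos[OF Imat_pd[OF pd] mu])
  then show ?thesis using U_props(2)[OF w] by (simp add: W_def)
qed

lemma eig_bound:
  assumes n: "1 \<le> n" and w: "\<omega> \<in> space M"
    and good: "\<And>e. mat_eigenvalue (real n *\<^sub>R matrix_inv (obs_info (l n \<omega>) (th n \<omega>))) e \<Longrightarrow> \<bar>e\<bar> \<le> C"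
    and mu: "\<mu> > 0" and v0: "v0 \<noteq> 0" "S n \<omega> *v v0 = \<mu> *\<^sub>R v0"
    and pd: "\<And>v. \<mu> * (v \<bullet> v) \<le> v \<bullet> (S n \<omega> *v v)"
  shows "1 / \<mu> \<le> C"
proof -
  define Ob where "Ob = obs_info (l n \<omega>) (th n \<omega>)"
  have ObS: "Ob = real n *\<^sub>R S n \<omega>" using n by (simp add: S_def Ob_def)
  have Obx: "Ob *v x = real n *\<^sub>R (S n \<omega> *v x)" for x
    unfolding ObS by (simp add: scaleR_matrix_vector_assoc)
  have "det Ob \<noteq> 0"
  proof (rule inj_det_nz)
    fix x assume "Ob *v x = 0"
    then have "S n \<omega> *v x = 0" using n by (simp add: Obx)
    then show "x = 0" by (rule pd_ker[OF pd mu])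
  qed
  then have inv: "matrix_inv Ob ** Ob = mat 1" by (rule matrix_inv_left'(1))
  have "matrix_inv Ob *v (Ob *v v0) = v0" by (simp add: matrix_vector_mul_assoc inv)
  then have "(real n * \<mu>) *\<^sub>R (matrix_inv Ob *v v0) = v0"
    by (simp add: Obx v0(2) matrix_vector_mult_scaleR)
  then have "(1 / \<mu>) *\<^sub>R ((real n * \<mu>) *\<^sub>R (matrix_inv Ob *v v0)) = (1 / \<mu>) *\<^sub>R v0" by simp
  then have "real n *\<^sub>R (matrix_inv Ob *v v0) = (1 / \<mu>) *\<^sub>R v0" using mu by simp
  then have "(real n *\<^sub>R matrix_inv Ob) *v v0 = (1 / \<mu>) *\<^sub>R v0"
    by (simp add: scaleR_matrix_vector_assoc[symmetric])
  then have "mat_eigenvalue (real n *\<^sub>R matrix_inv Ob) (1 / \<mu>)"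
    using v0(1) by (auto simp: mat_eigenvalue_def)
  then have "\<bar>1 / \<mu>\<bar> \<le> C" unfolding Ob_def by (rule good)
  then show ?thesis using mu by simp
qed

lemma mat_axis_entry: "((B::real^'k^'k) *v axis j 1) $ i = B $ i $ j"
proof -
  have "((B::real^'k^'k) *v axis j 1) $ i = (\<Sum>ja\<in>UNIV. B $ i $ ja * (if ja = j then 1 else 0))"
    by (simp add: matrix_vector_mult_def axis_def)
  also have "\<dots> = (\<Sum>ja\<in>UNIV. if ja = j then B $ i $ ja else 0)" by (rule sum.cong) auto
  also have "\<dots> = B $ i $ j" by simp
  finally show ?thesis .
qed

lemma Q_bound:
  assumes n: "1 \<le> n" and w: "\<omega> \<in> space M"
    and good: "\<And>e. mat_eigenvalue (real n *\<^sub>R matrix_inv (obs_info (l n \<omega>) (th n \<omega>))) e \<Longrightarrow> \<bar>e\<bar> \<le> C"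
  shows "\<bar>Qf n \<omega> (psihat n \<omega>)\<bar> \<le> real (card {p. p permutes (UNIV::'m set)}) * C ^ CARD('m)"
proof -
  obtain \<mu> v0 where mu: "\<mu> > 0" and v0: "v0 \<noteq> 0" "S n \<omega> *v v0 = \<mu> *\<^sub>R v0"
    and pd: "\<And>v. \<mu> * (v \<bullet> v) \<le> v \<bullet> (S n \<omega> *v v)"
    using mu_exists[OF n w] by blast
  have muC: "1 / \<mu> \<le> C" by (rule eig_bound[OF n w good mu v0 pd])
  define A where "A = Imat n \<omega> (psihat n \<omega>)"
  have pdA: "\<And>x. \<mu> * (x \<bullet> x) \<le> x \<bullet> (A *v x)" unfolding A_def by (rule Imat_pd[OF pd])
  have dA: "det A > 0" by (rule pd_det_pos[OF pdA mu])
  define B where "B = matrix_inv A"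
  have AB: "A ** B = mat 1" unfolding B_def using dA by (intro matrix_inv_left'(2)) simp
  have entries: "\<bar>B $ i $ j\<bar> \<le> C" for i j
  proof -
    define y where "y = B *v axis j 1"
    have "A *v y = axis j 1" by (simp add: y_def matrix_vector_mul_assoc AB)
    then have "norm y \<le> norm (axis j (1::real)) / \<mu>" by (rule pd_inv_bound[OF pdA mu])
    then have "norm y \<le> C" using muC by simp
    moreover have "\<bar>B $ i $ j\<bar> \<le> norm y"
      using Finite_Cartesian_Product.norm_nth_le[of y i] by (simp add: y_def mat_axis_entry)
    ultimately show ?thesis by simp
  qed
  have "det A * det B = 1" using det_mul[of A B] AB by simp
  then have "Qf n \<omega> (psihat n \<omega>) = det B" using dA by (simp add: Qf_def dI_def A_def field_simps)
  then show ?thesis using det_bound[of B C, OF entries] by simp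
qed

definition E :: "real \<Rightarrow> nat \<Rightarrow> 'a set" where
  "E C n = {\<omega>\<in>space M. \<exists>e. mat_eigenvalue (real n *\<^sub>R matrix_inv (obs_info (l n \<omega>) (th n \<omega>))) e \<and> \<bar>e\<bar> > C * 1}"

lemma E_small: "small M E"
  using A3c unfolding Op_eig_small E_def[abs_def] by simp

lemma notE: "\<omega> \<in> space M \<Longrightarrow> \<omega> \<notin> E C n \<Longrightarrow> mat_eigenvalue (real n *\<^sub>R matrix_inv (obs_info (l n \<omega>) (th n \<omega>))) e \<Longrightarrow> \<bar>e\<bar> \<le> C"
  by (force simp: E_def not_less)

lemma Alg_bounded: "G \<in> Alg \<Longrightarrow> Op M (\<lambda>n \<omega>. G n \<omega> (psihat n \<omega>)) (\<lambda>n. 1)"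
proof (induction rule: Alg.induct)
  case (a_gen js)
  have "Op M (\<lambda>n \<omega>. pds (l n \<omega>) js (th n \<omega>)) (\<lambda>n. real n)" using A1 a_gen by simp
  then show ?case
  proof (rule Op_transfer1)
    fix C
    show "\<exists>C' N0. \<forall>n\<ge>N0. \<forall>\<omega>\<in>space M. norm (pds (l n \<omega>) js (th n \<omega>)) \<le> C * real n \<longrightarrow> norm (P js n \<omega> (psihat n \<omega>)) \<le> C' * 1"
    proof (intro exI[of _ C] exI[of _ 1] allI impI ballI)
      fix n \<omega> assume n: "1 \<le> n" and h: "norm (pds (l n \<omega>) js (th n \<omega>)) \<le> C * real n"
      have "norm (P js n \<omega> (psihat n \<omega>)) = norm (pds (l n \<omega>) js (th n \<omega>)) / real n"
        by (simp add: P_def)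
      also have "\<dots> \<le> C" using h n by (simp add: divide_le_eq)
      finally show "norm (P js n \<omega> (psihat n \<omega>)) \<le> C * 1" by simp
    qed
  qed
next
  case a_Q
  show ?case
  proof (rule Op_family_E[where J="{}::unit set" and Y="\<lambda>_ n \<omega>. 0::real" and b="\<lambda>_ n. 1", OF _ _ E_small])
    fix C Ce
    show "\<exists>C' N0. \<forall>n\<ge>N0. \<forall>\<omega>\<in>space M. (\<forall>j\<in>{}. norm (0::real) \<le> C j * 1) \<longrightarrow> \<omega> \<notin> E Ce n \<longrightarrow>
      norm (Qf n \<omega> (psihat n \<omega>)) \<le> C' * 1"
      using Q_bound notE by (intro exI[of _ "real (card {p. p permutes (UNIV::'m set)}) * Ce ^ CARD('m)"] exI[of _ 1]) auto
  qed auto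
next
  case (a_const c) show ?case by (rule Op_const)
next
  case (a_add G H) show ?case by (rule Op_add[OF a_add.IH])
next
  case (a_mult G H) show ?case by (rule Op_mult[OF a_mult.IH])
qed

end

lemma Op_eqI:
  fixes X Y :: "nat \<Rightarrow> 'a \<Rightarrow> 'b::real_normed_vector"
  assumes Y: "Op M Y a" and e: "\<And>n \<omega>. 1 \<le> n \<Longrightarrow> \<omega> \<in> space M \<Longrightarrow> X n \<omega> = Y n \<omega>"
  shows "Op M X a"
  using Y
proof (rule Op_transfer1)
  fix C
  show "\<exists>C' N0. \<forall>n\<ge>N0. \<forall>\<omega>\<in>space M. norm (Y n \<omega>) \<le> C * a n \<longrightarrow> norm (X n \<omega>) \<le> C' * a n"
    using e by (intro exI[of _ C] exI[of _ 1]) auto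
qed

lemma Op_scale_n:
  fixes X :: "nat \<Rightarrow> 'a \<Rightarrow> 'b::real_normed_vector" and Y :: "nat \<Rightarrow> 'a \<Rightarrow> 'c::real_normed_vector"
  assumes Y: "Op M Y (\<lambda>n. 1)" and e: "\<And>n \<omega>. 1 \<le> n \<Longrightarrow> \<omega> \<in> space M \<Longrightarrow> norm (X n \<omega>) \<le> real n * norm (Y n \<omega>)"
  shows "Op M X (\<lambda>n. real n)"
  using Y
proof (rule Op_transfer1)
  fix C
  show "\<exists>C' N0. \<forall>n\<ge>N0. \<forall>\<omega>\<in>space M. norm (Y n \<omega>) \<le> C * 1 \<longrightarrow> norm (X n \<omega>) \<le> C' * real n"
  proof (intro exI[of _ C] exI[of _ 1] allI impI ballI)
    fix n :: nat and \<omega> assume n: "1 \<le> n" and w: "\<omega> \<in> space M" and h: "norm (Y n \<omega>) \<le> C * 1"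
    have "norm (X n \<omega>) \<le> real n * norm (Y n \<omega>)" by (rule e[OF n w])
    also have "\<dots> \<le> real n * C" using h by (intro mult_left_mono) auto
    finally show "norm (X n \<omega>) \<le> C * real n" by (simp add: mult.commute)
  qed
qed

lemma funpow_deriv_Suc: "(deriv ^^ Suc k) f = (deriv ^^ k) (deriv f)"
  by (simp only: funpow_Suc_right comp_def)

context LS2 begin

lemma lam_part:
  assumes k: "1 \<le> k"
  shows "Op M (\<lambda>n \<omega>. (\<chi> i. (deriv ^^ k) (\<lambda>t. lamhat n \<omega> t $ i) (psihat n \<omega>))) (\<lambda>n. 1)"
proof -
  obtain k' where k': "k = Suc k'" using k by (cases k) auto
  have "Op M (\<lambda>n \<omega>. (deriv ^^ k) (\<lambda>t. lamhat n \<omega> t $ i) (psihat n \<omega>)) (\<lambda>n. 1)" for i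
  proof -
    obtain H where H: "H \<in> Alg" "\<forall>n \<omega> \<psi>. 1 \<le> n \<longrightarrow> \<omega> \<in> space M \<longrightarrow> \<psi> \<in> W n \<omega> \<longrightarrow>
        (deriv ^^ k') (dlam i n \<omega>) \<psi> = 1 * H n \<omega> \<psi>"
      using iter[OF Lam_Alg[of i], where g="dlam i" and s="\<lambda>n. 1" and k=k'] dlam_Lam W_U W_dI by fastforce
    have dl: "deriv (\<lambda>t. lamhat n \<omega> t $ i) = dlam i n \<omega>" for n \<omega> by (rule ext) (simp add: dlam_def)
    show ?thesis
    proof (rule Op_eqI[OF Alg_bounded[OF H(1)]])
      fix n :: nat and \<omega> assume n: "1 \<le> n" and w: "\<omega> \<in> space M"
      show "(deriv ^^ k) (\<lambda>t. lamhat n \<omega> t $ i) (psihat n \<omega>) = H n \<omega> (psihat n \<omega>)"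
        using H(2) n w psihat_W[OF n w] by (simp add: k' funpow_deriv_Suc dl del: funpow.simps)
    qed
  qed
  then show ?thesis by (intro Op_vec) auto
qed

lemma negP_Alg: "2 \<le> length js \<Longrightarrow> (\<lambda>n \<omega> \<psi>. - P js n \<omega> \<psi>) \<in> Alg"
  by (rule Alg0_Alg[OF negP_Alg0])

lemma P_scale: "1 \<le> n \<Longrightarrow> pds (l n \<omega>) js (t, lamhat n \<omega> t) = real n * P js n \<omega> t"
  by (simp add: P_def)

lemma lp_part:
  shows "Op M (\<lambda>n \<omega>. (\<chi> i. (deriv ^^ k) (\<lambda>t. info_lp (l n \<omega>) (t, lamhat n \<omega> t) $ i) (psihat n \<omega>))) (\<lambda>n. real n)"
proof -
  have "Op M (\<lambda>n \<omega>. (deriv ^^ k) (\<lambda>t. info_lp (l n \<omega>) (t, lamhat n \<omega> t) $ i) (psihat n \<omega>)) (\<lambda>n. real n)" for i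
  proof -
    have eq: "\<And>n \<omega> \<psi>. 1 \<le> n \<Longrightarrow> \<omega> \<in> space M \<Longrightarrow> \<psi> \<in> W n \<omega> \<Longrightarrow>
        (\<lambda>n \<omega> t. info_lp (l n \<omega>) (t, lamhat n \<omega> t) $ i) n \<omega> \<psi> = real n * (\<lambda>n \<omega> \<psi>. - P [Some i, None] n \<omega> \<psi>) n \<omega> \<psi>"
      by (simp add: info_lp_def P_def)
    obtain H where H: "H \<in> Alg" "\<forall>n \<omega> \<psi>. 1 \<le> n \<longrightarrow> \<omega> \<in> space M \<longrightarrow> \<psi> \<in> W n \<omega> \<longrightarrow>
        (deriv ^^ k) ((\<lambda>n \<omega> t. info_lp (l n \<omega>) (t, lamhat n \<omega> t) $ i) n \<omega>) \<psi> = real n * H n \<omega> \<psi>"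
      using iter[OF negP_Alg[of "[Some i, None]", simplified] eq, where k=k] by blast
    show ?thesis
    proof (rule Op_scale_n[OF Alg_bounded[OF H(1)]])
      fix n :: nat and \<omega> assume n: "1 \<le> n" and w: "\<omega> \<in> space M"
      show "norm ((deriv ^^ k) (\<lambda>t. info_lp (l n \<omega>) (t, lamhat n \<omega> t) $ i) (psihat n \<omega>)) \<le> real n * norm (H n \<omega> (psihat n \<omega>))"
        using H(2) n w psihat_W[OF n w] by (simp add: abs_mult)
    qed
  qed
  then show ?thesis by (intro Op_vec) auto
qed

lemma ll_part:
  shows "Op M (\<lambda>n \<omega>. (\<chi> i j. (deriv ^^ k) (\<lambda>t. info_ll (l n \<omega>) (t, lamhat n \<omega> t) $ i $ j) (psihat n \<omega>))) (\<lambda>n. real n)"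
proof -
  have "Op M (\<lambda>n \<omega>. (deriv ^^ k) (\<lambda>t. info_ll (l n \<omega>) (t, lamhat n \<omega> t) $ i $ j) (psihat n \<omega>)) (\<lambda>n. real n)" for i j
  proof -
    have eq: "\<And>n \<omega> \<psi>. 1 \<le> n \<Longrightarrow> \<omega> \<in> space M \<Longrightarrow> \<psi> \<in> W n \<omega> \<Longrightarrow>
        (\<lambda>n \<omega> t. info_ll (l n \<omega>) (t, lamhat n \<omega> t) $ i $ j) n \<omega> \<psi> = real n * (\<lambda>n \<omega> \<psi>. - P [Some i, Some j] n \<omega> \<psi>) n \<omega> \<psi>"
      by (simp add: info_ll_def P_def)
    obtain H where H: "H \<in> Alg" "\<forall>n \<omega> \<psi>. 1 \<le> n \<longrightarrow> \<omega> \<in> space M \<longrightarrow> \<psi> \<in> W n \<omega> \<longrightarrow>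
        (deriv ^^ k) ((\<lambda>n \<omega> t. info_ll (l n \<omega>) (t, lamhat n \<omega> t) $ i $ j) n \<omega>) \<psi> = real n * H n \<omega> \<psi>"
      using iter[OF negP_Alg[of "[Some i, Some j]", simplified] eq, where k=k] by blast
    show ?thesis
    proof (rule Op_scale_n[OF Alg_bounded[OF H(1)]])
      fix n :: nat and \<omega> assume n: "1 \<le> n" and w: "\<omega> \<in> space M"
      show "norm ((deriv ^^ k) (\<lambda>t. info_ll (l n \<omega>) (t, lamhat n \<omega> t) $ i $ j) (psihat n \<omega>)) \<le> real n * norm (H n \<omega> (psihat n \<omega>))"
        using H(2) n w psihat_W[OF n w] by (simp add: abs_mult)
    qed
  qed
  then show ?thesis by (intro Op_mat) auto
qed

lemma info_ll_scale: "1 \<le> (n::nat) \<Longrightarrow> info_ll (l n \<omega>) (t, lamhat n \<omega> t) = real n *\<^sub>R Imat n \<omega> t"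
  by (simp add: vec_eq_iff info_ll_def Imat_def P_def)

lemma gam_part:
  assumes k: "1 \<le> k"
  shows "Op M (\<lambda>n \<omega>. gam (l n \<omega>) (lamhat n \<omega>) k (psihat n \<omega>)) (\<lambda>n. 1)"
proof -
  obtain k' where k': "k = Suc k'" using k by (cases k) auto
  obtain Hd where Hd: "Hd \<in> Alg" "hasD dI Hd" using Alg0_deriv[OF dI_Alg0] by blast
  define gl where "gl = (\<lambda>n \<omega> t. ln (det (info_ll (l n \<omega>) (t, lamhat n \<omega> t))))"
  have dgl: "deriv (gl n \<omega>) \<psi> = Hd n \<omega> \<psi> * Qf n \<omega> \<psi>" if n: "1 \<le> n" and w: "\<omega> \<in> space M" and p: "\<psi> \<in> W n \<omega>" for n \<omega> \<psi>
  proof -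
    define c where "c = real n ^ CARD('m)"
    have c0: "c > 0" using n by (simp add: c_def)
    have e: "gl n \<omega> = (\<lambda>t. ln (c * dI n \<omega> t))"
      by (rule ext) (simp add: gl_def info_ll_scale[OF n] det_scaleR_mat dI_def c_def)
    have d: "(dI n \<omega> has_real_derivative Hd n \<omega> \<psi>) (at \<psi>)" using Hd(2) w p by (simp add: hasD_def)
    have dp: "dI n \<omega> \<psi> > 0" using W_dI[OF p] .
    have "((\<lambda>t. ln (c * dI n \<omega> t)) has_real_derivative 1 / (c * dI n \<omega> \<psi>) * (c * Hd n \<omega> \<psi>)) (at \<psi>)"
      by (rule DERIV_chain2[OF DERIV_ln_divide DERIV_cmult[OF d]]) (use c0 dp in simp)
    moreover have "1 / (c * dI n \<omega> \<psi>) * (c * Hd n \<omega> \<psi>) = Hd n \<omega> \<psi> * Qf n \<omega> \<psi>"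
      using c0 dp by (simp add: Qf_def)
    ultimately show ?thesis unfolding e by (simp add: DERIV_imp_deriv)
  qed
  obtain H where H: "H \<in> Alg" "\<forall>n \<omega> \<psi>. 1 \<le> n \<longrightarrow> \<omega> \<in> space M \<longrightarrow> \<psi> \<in> W n \<omega> \<longrightarrow>
      (deriv ^^ k') ((\<lambda>n \<omega>. deriv (gl n \<omega>)) n \<omega>) \<psi> = 1 * H n \<omega> \<psi>"
    using iter[of "\<lambda>n \<omega> \<psi>. Hd n \<omega> \<psi> * Qf n \<omega> \<psi>" "\<lambda>n \<omega>. deriv (gl n \<omega>)" "\<lambda>n. 1" k'] Hd(1) dgl
    by (auto intro: a_mult a_Q)
  show ?thesis
  proof (rule Op_eqI[OF Alg_bounded[OF H(1)]])
    fix n :: nat and \<omega> assume n: "1 \<le> n" and w: "\<omega> \<in> space M"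
    have "gam (l n \<omega>) (lamhat n \<omega>) k (psihat n \<omega>) = (deriv ^^ k') (deriv (gl n \<omega>)) (psihat n \<omega>)"
      by (simp add: gam_def gl_def k' funpow_deriv_Suc del: funpow.simps)
    then show "gam (l n \<omega>) (lamhat n \<omega>) k (psihat n \<omega>) = H n \<omega> (psihat n \<omega>)"
      using H(2) n w psihat_W[OF n w] by simp
  qed
qed

end

lemma kappa_real:
  fixes n q Ce h c k :: real
  assumes n: "n \<ge> 1" and Ce: "Ce > 0" and q: "q \<ge> 1 / Ce" and h: "\<bar>h\<bar> \<le> c" and k: "k \<ge> 0"
  shows "\<bar>(n * h) / (n * q) powr (k / 2)\<bar> \<le> c * Ce powr (k / 2) * n powr (- (k - 2) / 2)"
proof -
  have q0: "q > 0" using q Ce by (smt (verit) divide_pos_pos)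
  have n0: "n > 0" using n by simp
  have "(n * q) powr (k / 2) = n powr (k / 2) * q powr (k / 2)" using n0 q0 by (simp add: powr_mult)
  moreover have "q powr (k / 2) \<ge> (1 / Ce) powr (k / 2)" using q Ce k by (intro powr_mono2) auto
  moreover have "(1 / Ce) powr (k / 2) = 1 / Ce powr (k / 2)" using Ce by (simp add: powr_divide)
  ultimately have den: "(n * q) powr (k / 2) \<ge> n powr (k / 2) / Ce powr (k / 2)"
    using n0 by (simp add: divide_le_eq mult_left_mono)  
  have dpos: "n powr (k / 2) / Ce powr (k / 2) > 0" using n0 Ce by simp
  have c0: "c \<ge> 0" using h by simp
  have "\<bar>(n * h) / (n * q) powr (k / 2)\<bar> = n * \<bar>h\<bar> / (n * q) powr (k / 2)"
    using n0 q0 by (simp add: abs_mult)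
  also have "\<dots> \<le> n * c / (n * q) powr (k / 2)"
    using h n0 by (intro divide_right_mono mult_left_mono) auto
  also have "\<dots> \<le> n * c / (n powr (k / 2) / Ce powr (k / 2))"
  proof (rule divide_left_mono)
    show "n powr (k / 2) / Ce powr (k / 2) \<le> (n * q) powr (k / 2)" by (rule den)
    show "0 \<le> n * c" using c0 n0 by simp
    show "0 < (n * q) powr (k / 2) * (n powr (k / 2) / Ce powr (k / 2))"
      using dpos n0 q0 by (intro mult_pos_pos) simp_all
  qed
  also have "\<dots> = c * Ce powr (k / 2) * (n / n powr (k / 2))" by (simp add: field_simps)
  also have "n / n powr (k / 2) = n powr (- (k - 2) / 2)"
  proof -
    have "n powr (k / 2) * n powr (- (k - 2) / 2) = n powr (k / 2 + - (k - 2) / 2)" by (rule powr_add[symmetric])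
    also have "k / 2 + - (k - 2) / 2 = 1" by (simp add: field_simps)
    finally have "n powr (k / 2) * n powr (- (k - 2) / 2) = n" using n0 by simp
    then show ?thesis using n0 by (simp add: field_simps)
  qed
  finally show ?thesis .
qed

context LS2 begin

definition prof :: "nat \<Rightarrow> 'a \<Rightarrow> real \<Rightarrow> real" where
  "prof n \<omega> = (\<lambda>t. l n \<omega> (t, lamhat n \<omega> t))"

lemma prof_deriv:
  assumes n: "1 \<le> n" and w: "\<omega> \<in> space M" and p: "\<psi> \<in> U n \<omega>"
  shows "(prof n \<omega> has_real_derivative real n * P [None] n \<omega> \<psi>) (at \<psi>)"
proof -
  have z: "P [Some i] n \<omega> \<psi> = 0" for i
    using stationary[OF w, simplified] by (simp add: P_def)
  have "(P [] n \<omega> has_real_derivative P [None] n \<omega> \<psi>) (at \<psi>)"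
    using P_deriv[OF w p, of "[]"] by (simp add: z)
  then have "((\<lambda>t. real n * P [] n \<omega> t) has_real_derivative real n * P [None] n \<omega> \<psi>) (at \<psi>)"
    by (rule DERIV_cmult)
  moreover have "(\<lambda>t. real n * P [] n \<omega> t) = prof n \<omega>"
    using n by (simp add: P_def prof_def)
  ultimately show ?thesis by simp
qed

lemma zeta1:
  assumes n: "1 \<le> n" and w: "\<omega> \<in> space M"
  shows "zeta (l n \<omega>) (lamhat n \<omega>) 1 (psihat n \<omega>) = 0"
proof -
  have d: "(prof n \<omega> has_real_derivative real n * P [None] n \<omega> (psihat n \<omega>)) (at (psihat n \<omega>))"
    by (rule prof_deriv[OF n w U_props(2)[OF w]])
  have "real n * P [None] n \<omega> (psihat n \<omega>) = 0"
    by (rule DERIV_local_max[OF d, of 1]) (use mle w in \<open>auto simp: prof_def\<close>)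
  then have "deriv (prof n \<omega>) (psihat n \<omega>) = 0" using DERIV_imp_deriv[OF d] by simp
  then show ?thesis by (simp add: zeta_def prof_def)
qed

definition K2 :: "nat \<Rightarrow> 'a \<Rightarrow> real \<Rightarrow> real" where
  "K2 n \<omega> \<psi> = P [None, None] n \<omega> \<psi> + (\<Sum>i\<in>UNIV. P [Some i, None] n \<omega> \<psi> * Lam i n \<omega> \<psi>)"

lemma K2_Alg: "K2 \<in> Alg"
  unfolding K2_def[abs_def] by (intro a_add a_gen Alg_sum a_mult Lam_Alg) auto

lemma ddprof:
  assumes n: "1 \<le> n" and w: "\<omega> \<in> space M" and p: "\<psi> \<in> W n \<omega>"
  shows "deriv (deriv (prof n \<omega>)) \<psi> = real n * K2 n \<omega> \<psi>"
proof (rule deriv_local[OF W_open[OF w] p])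
  fix y assume "y \<in> W n \<omega>"
  then show "deriv (prof n \<omega>) y = real n * P [None] n \<omega> y"
    using prof_deriv[OF n w W_U] DERIV_imp_deriv by blast
next
  have "(P [None] n \<omega> has_real_derivative K2 n \<omega> \<psi>) (at \<psi>)"
    using P_hasD[of "[None]"] w p unfolding hasD_def K2_def by simp
  then show "((\<lambda>y. real n * P [None] n \<omega> y) has_real_derivative real n * K2 n \<omega> \<psi>) (at \<psi>)"
    by (rule DERIV_cmult)
qed

lemma zeta_prof: "zeta (l n \<omega>) (lamhat n \<omega>) k \<psi> = (deriv ^^ k) (prof n \<omega>) \<psi>"
  by (simp add: zeta_def prof_def)

lemma zeta2:
  assumes n: "1 \<le> n" and w: "\<omega> \<in> space M"
  shows "zeta (l n \<omega>) (lamhat n \<omega>) 2 (psihat n \<omega>) = real n * K2 n \<omega> (psihat n \<omega>)"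
proof -
  have "(deriv ^^ 2) (prof n \<omega>) = deriv (deriv (prof n \<omega>))" by (simp add: numeral_2_eq_2)
  then show ?thesis using ddprof[OF n w psihat_W[OF n w]] by (simp add: zeta_prof)
qed

lemma zetak:
  assumes k: "2 \<le> k"
  shows "\<exists>H\<in>Alg. \<forall>n \<omega>. 1 \<le> n \<longrightarrow> \<omega> \<in> space M \<longrightarrow>
    zeta (l n \<omega>) (lamhat n \<omega>) k (psihat n \<omega>) = real n * H n \<omega> (psihat n \<omega>)"
proof -
  obtain k'' where k'': "k = Suc (Suc k'')" using k by (metis add_2_eq_Suc le_Suc_ex)
  obtain H where H: "H \<in> Alg" "\<forall>n \<omega> \<psi>. 1 \<le> n \<longrightarrow> \<omega> \<in> space M \<longrightarrow> \<psi> \<in> W n \<omega> \<longrightarrow>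
      (deriv ^^ k'') ((\<lambda>n \<omega>. deriv (deriv (prof n \<omega>))) n \<omega>) \<psi> = real n * H n \<omega> \<psi>"
    using iter[OF K2_Alg, where g="\<lambda>n \<omega>. deriv (deriv (prof n \<omega>))" and s=real and k=k''] ddprof by blast
  have zk: "zeta (l n \<omega>) (lamhat n \<omega>) k \<psi> = (deriv ^^ k'') (deriv (deriv (prof n \<omega>))) \<psi>" for n \<omega> \<psi>
    by (simp add: zeta_prof k'' funpow_deriv_Suc del: funpow.simps)
  show ?thesis
  proof (intro bexI[OF _ H(1)] allI impI)
    fix n :: nat and \<omega> assume n: "1 \<le> n" and w: "\<omega> \<in> space M"
    have "(deriv ^^ k'') (deriv (deriv (prof n \<omega>))) (psihat n \<omega>) = real n * H n \<omega> (psihat n \<omega>)"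
      using H(2) n w psihat_W[OF n w] by blast
    then show "zeta (l n \<omega>) (lamhat n \<omega>) k (psihat n \<omega>) = real n * H n \<omega> (psihat n \<omega>)"
      by (simp only: zk)
  qed
qed

lemma K2_lower:
  assumes n: "1 \<le> n" and w: "\<omega> \<in> space M" and mu: "\<mu> > 0"
    and pd: "\<And>v. \<mu> * (v \<bullet> v) \<le> v \<bullet> (S n \<omega> *v v)"
  shows "\<mu> \<le> - K2 n \<omega> (psihat n \<omega>)"
proof -
  let ?p = "psihat n \<omega>"
  define L where "L i = Lam i n \<omega> ?p" for i
  define s where "s a b = S n \<omega> $ a $ b" for a b
  have sym: "s a b = s b a" for a b
  proof -
    have "transpose (S n \<omega>) $ a $ b = S n \<omega> $ b $ a" by (simp add: Finite_Cartesian_Product.transpose_def)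
    then show ?thesis using S_sym[OF w] unfolding s_def by simp
  qed
  have pW: "?p \<in> W n \<omega>" by (rule psihat_W[OF n w])
  have dL: "dlam k n \<omega> ?p = L k" for k
    using dlam_Lam[OF w W_U[OF pW]] W_dI[OF pW] by (simp add: L_def)
  have eqn: "(\<Sum>k\<in>UNIV. s (Some k) (Some a) * L k) = - s None (Some a)" for a
    using lam_eq[OF w W_U[OF pW], of a] by (simp add: dL Imat_S s_def S_entry)
  define v where "v = (\<chi> a. case a of None \<Rightarrow> 1 | Some i \<Rightarrow> L i)"
  have Sv: "(S n \<omega> *v v) $ a = s a None + (\<Sum>k\<in>UNIV. s a (Some k) * L k)" for a
    by (simp add: matrix_vector_mult_def sum_option v_def s_def)
  have Sv0: "(S n \<omega> *v v) $ Some i = 0" for i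
  proof -
    have "(\<Sum>k\<in>UNIV. s (Some i) (Some k) * L k) = (\<Sum>k\<in>UNIV. s (Some k) (Some i) * L k)"
      using sym by simp
    then show ?thesis using Sv[of "Some i"] eqn[of i] sym[of "Some i" None] by simp
  qed
  have "v \<bullet> (S n \<omega> *v v) = (S n \<omega> *v v) $ None + (\<Sum>i\<in>UNIV. L i * (S n \<omega> *v v) $ Some i)"
    by (simp add: inner_vec_def sum_option v_def)
  also have "\<dots> = s None None + (\<Sum>k\<in>UNIV. s None (Some k) * L k)" using Sv Sv0 by simp
  also have "\<dots> = - K2 n \<omega> ?p"
  proof -
    have "(\<Sum>k\<in>UNIV. s None (Some k) * L k) = - (\<Sum>i\<in>UNIV. P [Some i, None] n \<omega> ?p * Lam i n \<omega> ?p)"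
      using sym by (simp add: s_def S_entry L_def sum_negf[symmetric])
    then show ?thesis by (simp add: K2_def s_def S_entry)
  qed
  finally have vS: "v \<bullet> (S n \<omega> *v v) = - K2 n \<omega> ?p" .
  have "v \<bullet> v = 1 + (\<Sum>i\<in>UNIV. L i * L i)" by (simp add: inner_vec_def sum_option v_def)
  then have "v \<bullet> v \<ge> 1" by (simp add: sum_nonneg)
  then have "\<mu> \<le> \<mu> * (v \<bullet> v)" using mu by (simp add: mult_le_cancel_left1)
  also have "\<dots> \<le> v \<bullet> (S n \<omega> *v v)" by (rule pd)
  finally show ?thesis using vS by simp
qed

lemma kappa_part:
  assumes k: "1 \<le> k"
  shows "Op M (\<lambda>n \<omega>. kappa (l n \<omega>) (lamhat n \<omega>) k (psihat n \<omega>)) (\<lambda>n. real n powr (- (real k - 2) / 2))"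
proof (cases "k = 1")
  case True
  show ?thesis
  proof (rule Op_transfer1[OF Op_const[of M "0::real"]])
    fix C
    show "\<exists>C' N0. \<forall>n\<ge>N0. \<forall>\<omega>\<in>space M. norm (0::real) \<le> C * 1 \<longrightarrow>
        norm (kappa (l n \<omega>) (lamhat n \<omega>) k (psihat n \<omega>)) \<le> C' * real n powr (- (real k - 2) / 2)"
      using zeta1 True by (intro exI[of _ 0] exI[of _ 1]) (auto simp: kappa_def)
  qed
next
  case False
  then have k2: "2 \<le> k" using k by simp
  obtain H where H: "H \<in> Alg" "\<forall>n \<omega>. 1 \<le> n \<longrightarrow> \<omega> \<in> space M \<longrightarrow>
    zeta (l n \<omega>) (lamhat n \<omega>) k (psihat n \<omega>) = real n * H n \<omega> (psihat n \<omega>)"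
    using zetak[OF k2] by blast
  show ?thesis
  proof (rule Op_family_E[where J="{()}" and Y="\<lambda>_ n \<omega>. H n \<omega> (psihat n \<omega>)" and b="\<lambda>_ n. 1", OF _ _ E_small])
    show "\<forall>j\<in>{()}. Op M (\<lambda>n \<omega>. H n \<omega> (psihat n \<omega>)) (\<lambda>n. 1)" using Alg_bounded[OF H(1)] by simp
    fix C :: "unit \<Rightarrow> real" and Ce :: real
    show "\<exists>C' N0. \<forall>n\<ge>N0. \<forall>\<omega>\<in>space M. (\<forall>j\<in>{()}. norm (H n \<omega> (psihat n \<omega>)) \<le> C j * 1) \<longrightarrow>
        \<omega> \<notin> E Ce n \<longrightarrow> norm (kappa (l n \<omega>) (lamhat n \<omega>) k (psihat n \<omega>)) \<le> C' * real n powr (- (real k - 2) / 2)"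
    proof (intro exI[of _ "C () * Ce powr (real k / 2)"] exI[of _ 1] allI impI ballI)
      fix n \<omega> assume n: "1 \<le> n" and w: "\<omega> \<in> space M" and hb: "\<forall>j\<in>{()}. norm (H n \<omega> (psihat n \<omega>)) \<le> C j * 1"
        and nE: "\<omega> \<notin> E Ce n"
      obtain \<mu> v0 where mu: "\<mu> > 0" and v0: "v0 \<noteq> 0" "S n \<omega> *v v0 = \<mu> *\<^sub>R v0"
        and pd: "\<And>v. \<mu> * (v \<bullet> v) \<le> v \<bullet> (S n \<omega> *v v)"
        using mu_exists[OF n w] by blast
      have muC: "1 / \<mu> \<le> Ce" by (rule eig_bound[OF n w notE[OF w nE] mu v0 pd])
      have Ce0: "Ce > 0" using muC mu by (smt (verit) divide_pos_pos)
      have q: "1 / Ce \<le> - K2 n \<omega> (psihat n \<omega>)"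
      proof -
        have "1 / Ce \<le> \<mu>" using muC mu Ce0 by (simp add: field_simps)
        also have "\<mu> \<le> - K2 n \<omega> (psihat n \<omega>)" by (rule K2_lower[OF n w mu pd])
        finally show ?thesis .
      qed
      have hC: "\<bar>H n \<omega> (psihat n \<omega>)\<bar> \<le> C ()" using hb by simp
      have "kappa (l n \<omega>) (lamhat n \<omega>) k (psihat n \<omega>) =
          (real n * H n \<omega> (psihat n \<omega>)) / (real n * (- K2 n \<omega> (psihat n \<omega>))) powr (real k / 2)"
        using H(2) n w zeta2[OF n w] by (simp add: kappa_def)
      also have "\<bar>\<dots>\<bar> \<le> C () * Ce powr (real k / 2) * real n powr (- (real k - 2) / 2)"
        by (rule kappa_real) (use n Ce0 q hC in auto)
      finally show "norm (kappa (l n \<omega>) (lamhat n \<omega>) k (psihat n \<omega>)) \<le> C () * Ce powr (real k / 2) * real n powr (- (real k - 2) / 2)"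
        by simp
    qed
  qed simp
qed

end

theorem lemma2:
  fixes M :: "'a measure"
    and l :: "nat \<Rightarrow> 'a \<Rightarrow> real \<times> (real^'m) \<Rightarrow> real"
    and psihat :: "nat \<Rightarrow> 'a \<Rightarrow> real"
    and lamhat :: "nat \<Rightarrow> 'a \<Rightarrow> real \<Rightarrow> real^'m"
    and psi0 :: real and lam0 :: "real^'m"
  assumes prob: "prob_space M"
    and smooth: "\<forall>n. \<forall>\<omega>\<in>space M. smooth_fun (l n \<omega>)"
    and prof_max: "\<forall>n. \<forall>\<omega>\<in>space M. \<forall>psi lam. l n \<omega> (psi, lam) \<le> l n \<omega> (psi, lamhat n \<omega> psi)"
    and mle: "\<forall>n. \<forall>\<omega>\<in>space M. \<forall>th. l n \<omega> th \<le> l n \<omega> (psihat n \<omega>, lamhat n \<omega> (psihat n \<omega>))"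
    and prof_smooth: "\<forall>n. \<forall>\<omega>\<in>space M. \<exists>U. open U \<and> psihat n \<omega> \<in> U \<and>
        (\<forall>i k. \<forall>psi\<in>U. (deriv ^^ k) (\<lambda>t. lamhat n \<omega> t $ i) differentiable (at psi))"
    and A1: "\<forall>js. length js > 1 \<longrightarrow>
        Op M (\<lambda>n \<omega>. pds (l n \<omega>) js (psihat n \<omega>, lamhat n \<omega> (psihat n \<omega>))) (\<lambda>n. real n)"
    and A2: "Op M (\<lambda>n \<omega>. (psihat n \<omega>, lamhat n \<omega> (psihat n \<omega>)) - (psi0, lam0)) (\<lambda>n. 1 / sqrt (real n))"
    and A3pos: "\<forall>n\<ge>1. \<forall>\<omega>\<in>space M. \<forall>e.
        (mat_eigenvalue ((1 / real n) *\<^sub>R obs_info (l n \<omega>) (psihat n \<omega>, lamhat n \<omega> (psihat n \<omega>))) e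
         \<or> mat_eigenvalue ((1 / real n) *\<^sub>R obs_info (l n \<omega>) (psi0, lamhat n \<omega> psi0)) e
         \<or> mat_eigenvalue (real n *\<^sub>R matrix_inv (obs_info (l n \<omega>) (psihat n \<omega>, lamhat n \<omega> (psihat n \<omega>)))) e
         \<or> mat_eigenvalue (real n *\<^sub>R matrix_inv (obs_info (l n \<omega>) (psi0, lamhat n \<omega> psi0))) e)
        \<longrightarrow> e > 0"
    and A3a: "Op_eig M (\<lambda>n \<omega>. (1 / real n) *\<^sub>R obs_info (l n \<omega>) (psihat n \<omega>, lamhat n \<omega> (psihat n \<omega>))) (\<lambda>n. 1)"
    and A3b: "Op_eig M (\<lambda>n \<omega>. (1 / real n) *\<^sub>R obs_info (l n \<omega>) (psi0, lamhat n \<omega> psi0)) (\<lambda>n. 1)"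
    and A3c: "Op_eig M (\<lambda>n \<omega>. real n *\<^sub>R matrix_inv (obs_info (l n \<omega>) (psihat n \<omega>, lamhat n \<omega> (psihat n \<omega>)))) (\<lambda>n. 1)"
    and A3d: "Op_eig M (\<lambda>n \<omega>. real n *\<^sub>R matrix_inv (obs_info (l n \<omega>) (psi0, lamhat n \<omega> psi0))) (\<lambda>n. 1)"
  shows "\<forall>k\<ge>1.
      Op M (\<lambda>n \<omega>. (\<chi> i. (deriv ^^ k) (\<lambda>t. lamhat n \<omega> t $ i) (psihat n \<omega>))) (\<lambda>n. 1)
    \<and> Op M (\<lambda>n \<omega>. (\<chi> i. (deriv ^^ k) (\<lambda>t. info_lp (l n \<omega>) (t, lamhat n \<omega> t) $ i) (psihat n \<omega>))) (\<lambda>n. real n)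
    \<and> Op M (\<lambda>n \<omega>. (\<chi> i j. (deriv ^^ k) (\<lambda>t. info_ll (l n \<omega>) (t, lamhat n \<omega> t) $ i $ j) (psihat n \<omega>))) (\<lambda>n. real n)
    \<and> Op M (\<lambda>n \<omega>. kappa (l n \<omega>) (lamhat n \<omega>) k (psihat n \<omega>)) (\<lambda>n. real n powr (- (real k - 2) / 2))
    \<and> Op M (\<lambda>n \<omega>. gam (l n \<omega>) (lamhat n \<omega>) k (psihat n \<omega>)) (\<lambda>n. 1)"
proof -
  interpret LS2 M l psihat lamhat psi0
    using smooth prof_max mle prof_smooth A1 A3pos A3c
    by (unfold_locales) blast+
  show ?thesis
    using lam_part lp_part ll_part kappa_part gam_part by blast
qed

end
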